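(* Let $S(1,2^n)$ be the spider obtained from $S(2^n)$ by adding a new leaf $u$ adjacent to the torso $v_0$, and identify $S(2^n)$ with the subgraph induced by $V(S(1,2^n))\setminus\{u\}$. Let $\alpha:V(S(1,2^n))\to\mathbb{N}$ satisfy $\alpha|_{S(2^n)}\in\mathcal{A}_k$ for some $k\ge2$. For $1\le j\le k$ define $\beta:V(S(1,2^n))\to\mathbb{N}$ by $\beta|_{S(2^n)}=\phi_j(\alpha|_{S(2^n)})$ and $\beta(u)=\alpha(u)$. Then $X_{S(1,2^n)}^\alpha+X_{S(1,2^n)}^\beta\ge_{2s}0$.
   Context: $S(2^n)$: torso $v_0$, vertices $v_i,v'_i$ ($1\le i\le n$), edges $v_0v_i,v_iv'_i$. $\mathcal{A}_k$: maps $\alpha$ on $V(S(2^n))$ with $\alpha(v_0)=1$, $\alpha(v_i)\le1$, $\alpha(v_i)+\alpha(v'_i)\le2$, $\#\{j:\alpha(v_j)=1,\alpha(v'_j)=0\}=k$. For $\alpha\in\mathcal{A}_k$ with $\{j:\alpha(v_j)=1,\alpha(v'_j)=0\}=\{i_1<\dots<i_k\}$, $\phi_j(\alpha)$ agrees with $\alpha$ except $\phi_j(\alpha)(v_{i_j})=2$, $\phi_j(\alpha)(v_0)=0$. $X_G^\alpha=\sum_\kappa\prod_ix_i^{a_i}$ over maps $\kappa$ with $|\kappa(v)|=\alpha(v)$ (sets of positive integers), disjoint on edges, $a_i=\#\{v:i\in\kappa(v)\}$. $f\ge_{2s}0$ means $[s_\lambda]f\ge0$ for all partitions $\lambda$ with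 at most two parts. *)

theory Defs
  imports Main
begin

text \<open>Vertices: Torso = v_0, Ucap = the extra leaf u, Mid i = v_i, End i = v'_i.\<close>
datatype svert = Torso | Ucap | Mid nat | End nat

definition spider_verts :: "nat \<Rightarrow> svert set" where
  "spider_verts n = {Torso} \<union> Mid ` {1..n} \<union> End ` {1..n}"

definition spider1_verts :: "nat \<Rightarrow> svert set" where
  "spider1_verts n = insert Ucap (spider_verts n)"

definition spider1_adj :: "nat \<Rightarrow> svert \<Rightarrow> svert \<Rightarrow> bool" where
  "spider1_adj n x y \<longleftrightarrow>
     (\<exists>i\<in>{1..n}. {x, y} = {Torso, Mid i} \<or> {x, y} = {Mid i, End i}) \<or> {x, y} = {Torso, Ucap}"

text \<open>A symmetric function (with integer coefficients) is represented by its coefficient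
  function on exponent vectors a (a i = exponent of x_i; variables indexed by positive
  integers, so a 0 is always 0 for genuine monomials).
  Coefficient of x^a in X_G^alpha = number of admissible kappa with exponent vector a.\<close>
definition Xcoef :: "'v set \<Rightarrow> ('v \<Rightarrow> 'v \<Rightarrow> bool) \<Rightarrow> ('v \<Rightarrow> nat) \<Rightarrow> (nat \<Rightarrow> nat) \<Rightarrow> int" where
  "Xcoef V E \<alpha> a = int (card {\<kappa> :: 'v \<Rightarrow> nat set.
      (\<forall>v. v \<notin> V \<longrightarrow> \<kappa> v = {}) \<and>
      (\<forall>v\<in>V. \<kappa> v \<subseteq> {1..} \<and> finite (\<kappa> v) \<and> card (\<kappa> v) = \<alpha> v) \<and>
      (\<forall>v\<in>V. \<forall>w\<in>V. E v w \<longrightarrow> \<kappa> v \<inter> \<kappa> w = {}) \<and>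
      (\<forall>i. a i = card {v\<in>V. i \<in> \<kappa> v})})"

definition is_partition :: "nat list \<Rightarrow> bool" where
  "is_partition la \<longleftrightarrow> sorted_wrt (\<ge>) la \<and> (\<forall>x\<in>set la. 0 < x)"

definition partitions_of :: "nat \<Rightarrow> nat list set" where
  "partitions_of d = {la. is_partition la \<and> sum_list la = d}"

definition cells :: "nat list \<Rightarrow> (nat \<times> nat) set" where
  "cells la = {(r, c). r < length la \<and> c < la ! r}"

definition ssyt :: "nat list \<Rightarrow> (nat \<Rightarrow> nat) \<Rightarrow> (nat \<times> nat \<Rightarrow> nat) set" where
  "ssyt la a = {T. (\<forall>p. p \<notin> cells la \<longrightarrow> T p = 0) \<and>
      (\<forall>p\<in>cells la. 1 \<le> T p) \<and>
      (\<forall>r c. (r, Suc c) \<in> cells la \<longrightarrow> T (r, c) \<le> T (r, Suc c)) \<and>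
      (\<forall>r c. (Suc r, c) \<in> cells la \<longrightarrow> T (r, c) < T (Suc r, c)) \<and>
      (\<forall>i. a i = card {p\<in>cells la. T p = i})}"

text \<open>Coefficient of x^a in the Schur function s_lambda (Kostka number).\<close>
definition schur :: "nat list \<Rightarrow> (nat \<Rightarrow> nat) \<Rightarrow> int" where
  "schur la a = int (card (ssyt la a))"

definition schur_coeff :: "nat \<Rightarrow> ((nat \<Rightarrow> nat) \<Rightarrow> int) \<Rightarrow> nat list \<Rightarrow> int" where
  "schur_coeff d f la = (THE c :: nat list \<Rightarrow> int.
      (\<forall>mu. c mu \<noteq> 0 \<longrightarrow> mu \<in> partitions_of d) \<and>
      (\<forall>a. f a = (\<Sum>mu\<in>partitions_of d. c mu * schur mu a))) la"

definition schur2_nonneg :: "nat \<Rightarrow> ((nat \<Rightarrow> nat) \<Rightarrow> int) \<Rightarrow> bool" where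
  "schur2_nonneg d f \<longleftrightarrow> (\<forall>la. is_partition la \<and> length la \<le> 2 \<longrightarrow> 0 \<le> schur_coeff d f la)"

definition special_legs :: "nat \<Rightarrow> (svert \<Rightarrow> nat) \<Rightarrow> nat set" where
  "special_legs n \<alpha> = {j\<in>{1..n}. \<alpha> (Mid j) = 1 \<and> \<alpha> (End j) = 0}"

text \<open>alpha restricted to V(S(2^n)) lies in A_k (values off V(S(2^n)) are irrelevant).\<close>
definition in_A :: "nat \<Rightarrow> nat \<Rightarrow> (svert \<Rightarrow> nat) \<Rightarrow> bool" where
  "in_A n k \<alpha> \<longleftrightarrow> \<alpha> Torso = 1 \<and> (\<forall>i\<in>{1..n}. \<alpha> (Mid i) \<le> 1 \<and> \<alpha> (Mid i) + \<alpha> (End i) \<le> 2)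
     \<and> card (special_legs n \<alpha>) = k"

definition phi :: "nat \<Rightarrow> nat \<Rightarrow> (svert \<Rightarrow> nat) \<Rightarrow> (svert \<Rightarrow> nat)" where
  "phi n j \<alpha> = \<alpha>(Mid (sorted_list_of_set (special_legs n \<alpha>) ! (j - 1)) := 2, Torso := 0)"

end

theory Submission
  imports Defs
begin

definition sw :: "nat \<Rightarrow> nat \<Rightarrow> nat" where
  "sw i v = (if v = i then Suc i else if v = Suc i then i else v)"

definition rho :: "nat list \<Rightarrow> (nat \<times> nat \<Rightarrow> nat) \<Rightarrow> nat \<Rightarrow> nat \<Rightarrow> nat" where
  "rho la T j r = card {c. (r, c) \<in> cells la \<and> T (r, c) \<le> j}"

lemma cells_iff: "(r, c) \<in> cells la \<longleftrightarrow> r < length la \<and> c < la ! r"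
  by (simp add: cells_def)

lemma finite_cells: "finite (cells la)"
proof -
  have "cells la \<subseteq> {..<length la} \<times> {..<sum_list la + 1}"
    by (auto simp: cells_def less_Suc_eq_le intro: le_trans[OF less_imp_le elem_le_sum_list])
  then show ?thesis by (rule finite_subset) auto
qed

lemma finite_row: "finite {c. (r, c) \<in> cells la \<and> P c}"
  by (rule finite_subset[of _ "{..<la ! r}"]) (auto simp: cells_iff)

lemma part_nth_mono:
  assumes "is_partition la" "r \<le> r'" "r' < length la"
  shows "la ! r' \<le> la ! r"
proof (cases "r = r'")
  case False
  then have "r < r'" using assms by simp
  with assms show ?thesis unfolding is_partition_def
    using sorted_wrt_nth_less[of "(\<ge>)" la r r'] by auto
qed simp

lemma part_cell_up:
  assumes "is_partition la" "(Suc r, c) \<in> cells la"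
  shows "(r, c) \<in> cells la"
  using assms part_nth_mono[of la r "Suc r"] by (auto simp: cells_iff)

lemma ssyt_row_mono:
  assumes "T \<in> ssyt la a" "(r, c') \<in> cells la" "c \<le> c'"
  shows "T (r, c) \<le> T (r, c')"
  using assms(3,2)
proof (induction c' rule: dec_induct)
  case base then show ?case by simp
next
  case (step m)
  then have "(r, m) \<in> cells la" by (auto simp: cells_iff)
  with step have "T (r, c) \<le> T (r, m)" by simp
  also have "T (r, m) \<le> T (r, Suc m)" using assms(1) step.prems by (simp add: ssyt_def)
  finally show ?case .
qed

lemma downclosed_eq:
  fixes D :: "nat set"
  assumes "finite D" "\<And>x y. x \<in> D \<Longrightarrow> y \<le> x \<Longrightarrow> y \<in> D"
  shows "x \<in> D \<longleftrightarrow> x < card D"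
proof
  assume "x \<in> D"
  then have "{..x} \<subseteq> D" using assms(2) by auto
  then have "card {..x} \<le> card D" using assms(1) by (rule card_mono[rotated])
  then show "x < card D" by simp
next
  assume a: "x < card D"
  show "x \<in> D"
  proof (rule ccontr)
    assume "x \<notin> D"
    then have "D \<subseteq> {..<x}" using assms(2) by (metis lessThan_iff not_le subsetI)
    then have "card D \<le> x" using card_mono[of "{..<x}" D] by simp
    with a show False by simp
  qed
qed

lemma thr_ssyt:
  assumes "T \<in> ssyt la a" "(r, c) \<in> cells la"
  shows "T (r, c) \<le> j \<longleftrightarrow> c < rho la T j r"
proof -
  let ?D = "{c. (r, c) \<in> cells la \<and> T (r, c) \<le> j}"
  have fin: "finite ?D" by (rule finite_row)
  have dc: "\<And>x y. x \<in> ?D \<Longrightarrow> y \<le> x \<Longrightarrow> y \<in> ?D"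
    using ssyt_row_mono[OF assms(1)] by (auto simp: cells_iff intro: le_trans)
  have "c \<in> ?D \<longleftrightarrow> c < card ?D" by (rule downclosed_eq[OF fin dc])
  then show ?thesis using assms(2) unfolding rho_def by auto
qed

lemma rho_le: "rho la T j r \<le> (if r < length la then la ! r else 0)"
proof -
  have "{c. (r, c) \<in> cells la \<and> T (r, c) \<le> j} \<subseteq> (if r < length la then {..<la ! r} else {})"
    by (auto simp: cells_iff)
  from card_mono[OF _ this] show ?thesis unfolding rho_def by (auto split: if_splits)
qed

lemma rho_mono:
  assumes "j \<le> j'"
  shows "rho la T j r \<le> rho la T j' r"
  unfolding rho_def
  by (rule card_mono) (use assms finite_row in auto)

lemma rho_inter:
  assumes "T \<in> ssyt la a" "is_partition la"
  shows "rho la T (Suc j) (Suc r) \<le> rho la T j r"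
  unfolding rho_def
proof (rule card_mono[OF finite_row], safe)
  fix c assume c: "(Suc r, c) \<in> cells la" "T (Suc r, c) \<le> Suc j"
  show "(r, c) \<in> cells la" using part_cell_up[OF assms(2) c(1)] .
  have "T (r, c) < T (Suc r, c)" using assms(1) c(1) by (simp add: ssyt_def)
  then show "T (r, c) \<le> j" using c(2) by simp
qed

lemma card_by_rows:
  "card {p \<in> cells la. P p} = (\<Sum>r<length la. card {c. (r, c) \<in> cells la \<and> P (r, c)})"
proof -
  have "{p \<in> cells la. P p} = (SIGMA r:{..<length la}. {c. (r, c) \<in> cells la \<and> P (r, c)})"
    by (auto simp: cells_iff)
  then show ?thesis by (simp add: card_SigmaI finite_row)
qed

definition thr :: "nat list \<Rightarrow> (nat \<times> nat \<Rightarrow> nat) \<Rightarrow> (nat \<Rightarrow> nat \<Rightarrow> nat) \<Rightarrow> bool" where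
  "thr la T R \<longleftrightarrow> (\<forall>r c j. (r, c) \<in> cells la \<longrightarrow> (T (r, c) \<le> j \<longleftrightarrow> c < R j r))"

lemma thr_rho: "T \<in> ssyt la a \<Longrightarrow> thr la T (rho la T)"
  using thr_ssyt unfolding thr_def by blast

lemma row_count:
  assumes "thr la T R" "1 \<le> v" "r < length la" "R v r \<le> la ! r"
  shows "card {c. (r, c) \<in> cells la \<and> T (r, c) = v} = R v r - R (v - 1) r"
proof -
  have "(r, c) \<in> cells la \<and> T (r, c) = v \<longleftrightarrow> c \<in> {R (v - 1) r..<R v r}" for c
  proof
    assume c: "(r, c) \<in> cells la \<and> T (r, c) = v"
    have "T (r, c) \<le> v" "\<not> T (r, c) \<le> v - 1" using c assms(2) by auto
    then show "c \<in> {R (v - 1) r..<R v r}"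
      using assms(1) c unfolding thr_def by (auto simp: not_less)
  next
    assume c: "c \<in> {R (v - 1) r..<R v r}"
    then have rc: "(r, c) \<in> cells la" using assms(3,4) by (auto simp: cells_iff)
    have "T (r, c) \<le> v" "\<not> T (r, c) \<le> v - 1" using assms(1) rc c unfolding thr_def by auto
    then show "(r, c) \<in> cells la \<and> T (r, c) = v" using rc by linarith
  qed
  then have "{c. (r, c) \<in> cells la \<and> T (r, c) = v} = {R (v - 1) r..<R v r}" by blast
  then show ?thesis by simp
qed

lemma thr_rows_cols:
  assumes "thr la T R" "is_partition la" "\<And>j r. R (Suc j) (Suc r) \<le> R j r"
    "\<And>p. p \<in> cells la \<Longrightarrow> 1 \<le> T p"
  shows "\<And>r c. (r, Suc c) \<in> cells la \<Longrightarrow> T (r, c) \<le> T (r, Suc c)"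
    and "\<And>r c. (Suc r, c) \<in> cells la \<Longrightarrow> T (r, c) < T (Suc r, c)"
proof -
  fix r c assume rc: "(r, Suc c) \<in> cells la"
  then have rc': "(r, c) \<in> cells la" by (auto simp: cells_iff)
  have "Suc c < R (T (r, Suc c)) r" using assms(1) rc unfolding thr_def by blast
  then have "c < R (T (r, Suc c)) r" by simp
  then show "T (r, c) \<le> T (r, Suc c)" using assms(1) rc' unfolding thr_def by blast
next
  fix r c assume rc: "(Suc r, c) \<in> cells la"
  have rc': "(r, c) \<in> cells la" using part_cell_up[OF assms(2) rc] .
  define v where "v = T (Suc r, c)"
  have v1: "1 \<le> v" using assms(4)[OF rc] by (simp add: v_def)
  have "c < R v (Suc r)" using assms(1) rc unfolding thr_def v_def by blast
  also have "R v (Suc r) = R (Suc (v - 1)) (Suc r)" using v1 by simp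
  also have "\<dots> \<le> R (v - 1) r" by (rule assms(3))
  finally have "T (r, c) \<le> v - 1" using assms(1) rc' unfolding thr_def by blast
  then show "T (r, c) < T (Suc r, c)" using v1 v_def by linarith
qed

definition lo :: "nat list \<Rightarrow> (nat \<times> nat \<Rightarrow> nat) \<Rightarrow> nat \<Rightarrow> nat \<Rightarrow> nat" where
  "lo la T i r = max (rho la T (i - 1) r) (rho la T (Suc i) (Suc r))"
definition hi :: "nat list \<Rightarrow> (nat \<times> nat \<Rightarrow> nat) \<Rightarrow> nat \<Rightarrow> nat \<Rightarrow> nat" where
  "hi la T i r = (if r = 0 then rho la T (Suc i) 0 else min (rho la T (Suc i) r) (rho la T (i - 1) (r - 1)))"
definition rp :: "nat list \<Rightarrow> (nat \<times> nat \<Rightarrow> nat) \<Rightarrow> nat \<Rightarrow> nat \<Rightarrow> nat" where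
  "rp la T i r = lo la T i r + hi la T i r - rho la T i r"
definition gt :: "nat list \<Rightarrow> nat \<Rightarrow> (nat \<times> nat \<Rightarrow> nat) \<Rightarrow> (nat \<times> nat \<Rightarrow> nat)" where
  "gt la i T = (\<lambda>(r, c). if (r, c) \<in> cells la \<and> (T (r, c) = i \<or> T (r, c) = Suc i)
      then (if c < rp la T i r then i else Suc i) else T (r, c))"
definition Rg :: "nat list \<Rightarrow> (nat \<times> nat \<Rightarrow> nat) \<Rightarrow> nat \<Rightarrow> nat \<Rightarrow> nat \<Rightarrow> nat" where
  "Rg la T i j r = (if j = i then rp la T i r else rho la T j r)"

lemma telesc:
  fixes x y :: "nat \<Rightarrow> int"
  shows "(\<Sum>r<Suc L. max (x r) (y (Suc r)) + (if r = 0 then y 0 else min (y r) (x (r - 1))))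
    = (\<Sum>r<Suc L. x r + y r) + y (Suc L) - min (x L) (y (Suc L))"
  by (induction L) (auto simp: max_def min_def)

lemma rho_thr_eq:
  assumes "thr la T R" "\<And>j r. R j r \<le> (if r < length la then la ! r else 0)"
  shows "rho la T j r = R j r"
proof (cases "r < length la")
  case True
  have "{c. (r, c) \<in> cells la \<and> T (r, c) \<le> j} = {..<R j r}"
    using assms(1) assms(2)[of j r] True unfolding thr_def by (auto simp: cells_iff)
  then show ?thesis by (simp add: rho_def)
next
  case False
  then show ?thesis using assms(2)[of j r] rho_le[of la T j r] by simp
qed

context
  fixes la :: "nat list" and T :: "nat \<times> nat \<Rightarrow> nat" and a :: "nat \<Rightarrow> nat" and i :: nat
  assumes ss: "T \<in> ssyt la a" and pa: "is_partition la" and i1: "1 \<le> i"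
begin

lemma im1: "i - Suc 0 \<noteq> i" "i - 1 \<noteq> i" using i1 by auto

lemma gt_bounds:
  "rho la T (i - 1) r \<le> lo la T i r" "lo la T i r \<le> rho la T i r"
  "rho la T i r \<le> hi la T i r" "hi la T i r \<le> rho la T (Suc i) r"
  "lo la T i r \<le> rp la T i r" "rp la T i r \<le> hi la T i r"
proof -
  have m1: "rho la T (i - 1) r \<le> rho la T i r" by (rule rho_mono) simp
  have m2: "rho la T i r \<le> rho la T (Suc i) r" by (rule rho_mono) simp
  have i2: "rho la T (Suc i) (Suc r) \<le> rho la T i r" by (rule rho_inter[OF ss pa])
  have i3: "rho la T i r \<le> rho la T (i - 1) (r - 1)" if "r > 0"
    using rho_inter[OF ss pa, of "i - 1" "r - 1"] that i1 by simp
  show "rho la T (i - 1) r \<le> lo la T i r" by (simp add: lo_def)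
  show a: "lo la T i r \<le> rho la T i r" using m1 i2 by (simp add: lo_def)
  show b: "rho la T i r \<le> hi la T i r" using m2 i3 by (cases "r = 0") (auto simp: hi_def)
  show "hi la T i r \<le> rho la T (Suc i) r" by (simp add: hi_def)
  show "lo la T i r \<le> rp la T i r" using b by (simp add: rp_def)
  show "rp la T i r \<le> hi la T i r" using a by (simp add: rp_def)
qed

lemma thr_gt: "thr la (gt la i T) (Rg la T i)"
  unfolding thr_def
proof (intro allI impI)
  fix r c j assume rc: "(r, c) \<in> cells la"
  note th = thr_ssyt[OF ss rc]
  note b = gt_bounds[of r]
  have m1: "rho la T j r \<le> rho la T (i - 1) r" if "j < i" by (rule rho_mono) (use that in simp)
  have m2: "rho la T (Suc i) r \<le> rho la T j r" if "j > i" by (rule rho_mono) (use that in simp)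
  show "gt la i T (r, c) \<le> j \<longleftrightarrow> c < Rg la T i j r"
  proof (cases "T (r, c) = i \<or> T (r, c) = Suc i")
    case True
    have c1: "rho la T (i - 1) r \<le> c" using th[of "i - 1"] True i1 by auto
    have c2: "c < rho la T (Suc i) r" using th[of "Suc i"] True by auto
    show ?thesis
    proof (cases "j = i")
      case True
      then show ?thesis using \<open>T (r, c) = i \<or> T (r, c) = Suc i\<close> rc by (simp add: gt_def Rg_def)
    next
      case False
      show ?thesis
      proof (cases "j < i")
        case True
        then show ?thesis
          using \<open>T (r, c) = i \<or> T (r, c) = Suc i\<close> rc c1 c2 m1[OF True] by (auto simp: gt_def Rg_def)
      next
        case False
        then have "j > i" using \<open>j \<noteq> i\<close> by simp
        then show ?thesis
          using \<open>T (r, c) = i \<or> T (r, c) = Suc i\<close> rc c1 c2 m2[OF \<open>j > i\<close>] by (auto simp: gt_def Rg_def)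
      qed
    qed
  next
    case False
    then have g: "gt la i T (r, c) = T (r, c)" by (simp add: gt_def)
    show ?thesis
    proof (cases "j = i")
      case True
      show ?thesis
      proof (cases "T (r, c) < i")
        case True
        then have "T (r, c) \<le> i - 1" by simp
        then have "c < rho la T (i - 1) r" using th[of "i - 1"] by simp
        then show ?thesis using g True \<open>j = i\<close> b by (simp add: Rg_def)
      next
        case False
        then have "T (r, c) > Suc i" using \<open>\<not> (T (r, c) = i \<or> T (r, c) = Suc i)\<close> by simp
        then have "\<not> c < rho la T (Suc i) r" using th[of "Suc i"] by simp
        then show ?thesis using g \<open>T (r, c) > Suc i\<close> \<open>j = i\<close> b by (simp add: Rg_def)
      qed
    next
      case False
      then show ?thesis using g th by (simp add: Rg_def)
    qed
  qed
qed

lemma Rg_inter: "Rg la T i (Suc j) (Suc r) \<le> Rg la T i j r"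
proof -
  have i2: "rho la T (Suc j) (Suc r) \<le> rho la T j r" for j r by (rule rho_inter[OF ss pa])
  show ?thesis
  proof (cases "j = i")
    case True
    then show ?thesis using gt_bounds[of r] by (simp add: Rg_def lo_def)
  next
    case False
    show ?thesis
    proof (cases "Suc j = i")
      case True
      have "i - Suc 0 = j" using True by simp
      then have "rp la T i (Suc r) \<le> rho la T j r"
        using gt_bounds(6)[of "Suc r"] by (simp add: hi_def)
      then show ?thesis using True False by (simp add: Rg_def)
    next
      case False
      then show ?thesis using \<open>j \<noteq> i\<close> i2 by (simp add: Rg_def)
    qed
  qed
qed

lemma Rg_le: "Rg la T i j r \<le> (if r < length la then la ! r else 0)"
  using rho_le[of la T j r] rho_le[of la T "Suc i" r] gt_bounds(4,6)[of r]
  by (auto simp: Rg_def split: if_splits)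

lemma rho_gt: "rho la (gt la i T) j r = Rg la T i j r"
  by (rule rho_thr_eq[OF thr_gt Rg_le])

lemma sum_rows_eq:
  "(\<Sum>r<length la. rp la T i r - rho la T (i - 1) r) = (\<Sum>r<length la. rho la T (Suc i) r - rho la T i r)"
  "(\<Sum>r<length la. rho la T (Suc i) r - rp la T i r) = (\<Sum>r<length la. rho la T i r - rho la T (i - 1) r)"
proof -
  let ?L = "length la"
  define x where "x r = int (rho la T (i - 1) r)" for r
  define y where "y r = int (rho la T (Suc i) r)" for r
  define z where "z r = int (rho la T i r)" for r
  have key: "(\<Sum>r<?L. int (lo la T i r) + int (hi la T i r)) = (\<Sum>r<?L. x r + y r)"
  proof (cases ?L)
    case 0 then show ?thesis by simp
  next
    case (Suc L')
    have y0: "y (Suc L') = 0" using rho_le[of la T "Suc i" "Suc L'"] Suc by (simp add: y_def)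
    have x0: "x L' \<ge> 0" by (simp add: x_def)
    have "(\<Sum>r<?L. int (lo la T i r) + int (hi la T i r))
       = (\<Sum>r<Suc L'. max (x r) (y (Suc r)) + (if r = 0 then y 0 else min (y r) (x (r - 1))))"
      unfolding Suc by (rule sum.cong) (auto simp: lo_def hi_def x_def y_def max_def min_def)
    also have "\<dots> = (\<Sum>r<Suc L'. x r + y r)" using telesc[of x y L'] y0 x0 by simp
    finally show ?thesis using Suc by simp
  qed
  have e1: "int (rp la T i r - rho la T (i - 1) r) = int (lo la T i r) + int (hi la T i r) - z r - x r" for r
    using gt_bounds[of r] by (simp add: rp_def x_def z_def of_nat_diff)
  have e2: "int (rho la T (Suc i) r - rho la T i r) = y r - z r" for r
    using gt_bounds[of r] by (simp add: y_def z_def of_nat_diff)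
  have e3: "int (rho la T (Suc i) r - rp la T i r) = y r - (int (lo la T i r) + int (hi la T i r) - z r)" for r
    using gt_bounds[of r] by (simp add: rp_def y_def z_def of_nat_diff)
  have e4: "int (rho la T i r - rho la T (i - 1) r) = z r - x r" for r
    using gt_bounds[of r] rho_mono[of "i - 1" i la T r] by (simp add: x_def z_def of_nat_diff)
  have "int (\<Sum>r<?L. rp la T i r - rho la T (i - 1) r) = int (\<Sum>r<?L. rho la T (Suc i) r - rho la T i r)"
    unfolding of_nat_sum e1 e2 using key by (simp add: sum.distrib sum_subtractf)
  then show "(\<Sum>r<?L. rp la T i r - rho la T (i - 1) r) = (\<Sum>r<?L. rho la T (Suc i) r - rho la T i r)"
    by (simp only: of_nat_eq_iff)
  have "int (\<Sum>r<?L. rho la T (Suc i) r - rp la T i r) = int (\<Sum>r<?L. rho la T i r - rho la T (i - 1) r)"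
    unfolding of_nat_sum e3 e4 using key by (simp add: sum.distrib sum_subtractf)
  then show "(\<Sum>r<?L. rho la T (Suc i) r - rp la T i r) = (\<Sum>r<?L. rho la T i r - rho la T (i - 1) r)"
    by (simp only: of_nat_eq_iff)
qed

lemma count_T:
  assumes "1 \<le> v"
  shows "card {p \<in> cells la. T p = v} = (\<Sum>r<length la. rho la T v r - rho la T (v - 1) r)"
  unfolding card_by_rows
  apply (rule sum.cong[OF refl])
  subgoal for r using rho_le[of la T v r] by (intro row_count[OF thr_rho[OF ss] assms]) auto
  done

lemma count_gt:
  assumes "1 \<le> v"
  shows "card {p \<in> cells la. gt la i T p = v} = (\<Sum>r<length la. Rg la T i v r - Rg la T i (v - 1) r)"
  unfolding card_by_rows
  apply (rule sum.cong[OF refl])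
  subgoal for r using Rg_le[of v r] by (intro row_count[OF thr_gt assms]) auto
  done

lemma gt_ssyt: "gt la i T \<in> ssyt la (a \<circ> sw i)"
proof -
  have z: "\<forall>p. p \<notin> cells la \<longrightarrow> T p = 0" and pos: "\<forall>p\<in>cells la. 1 \<le> T p"
    and cnt: "\<forall>v. a v = card {p\<in>cells la. T p = v}" using ss by (auto simp: ssyt_def)
  have z': "\<forall>p. p \<notin> cells la \<longrightarrow> gt la i T p = 0" using z by (auto simp: gt_def)
  have pos': "\<And>p. p \<in> cells la \<Longrightarrow> 1 \<le> gt la i T p" using pos i1 by (auto simp: gt_def)
  note rc = thr_rows_cols[OF thr_gt pa Rg_inter pos']
  have cnt': "(a \<circ> sw i) v = card {p\<in>cells la. gt la i T p = v}" for v
  proof -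
    consider "v = i" | "v = Suc i" | "v \<noteq> i" "v \<noteq> Suc i" by blast
    then show ?thesis
    proof cases
      case 1
      have "(a \<circ> sw i) v = card {p\<in>cells la. T p = Suc i}" using 1 cnt by (simp add: sw_def)
      also have "\<dots> = (\<Sum>r<length la. rho la T (Suc i) r - rho la T i r)" using count_T[of "Suc i"] by simp
      also have "\<dots> = (\<Sum>r<length la. rp la T i r - rho la T (i - 1) r)" using sum_rows_eq(1) by simp
      also have "\<dots> = card {p\<in>cells la. gt la i T p = v}" using count_gt[of i] i1 1 im1 by (simp add: Rg_def)
      finally show ?thesis .
    next
      case 2
      have "(a \<circ> sw i) v = card {p\<in>cells la. T p = i}" using 2 cnt by (simp add: sw_def)
      also have "\<dots> = (\<Sum>r<length la. rho la T i r - rho la T (i - 1) r)" using count_T[of i] i1 by simp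
      also have "\<dots> = (\<Sum>r<length la. rho la T (Suc i) r - rp la T i r)" using sum_rows_eq(2) by simp
      also have "\<dots> = card {p\<in>cells la. gt la i T p = v}" using count_gt[of "Suc i"] 2 by (simp add: Rg_def)
      finally show ?thesis .
    next
      case 3
      have "{p\<in>cells la. gt la i T p = v} = {p\<in>cells la. T p = v}" using 3 by (auto simp: gt_def)
      then show ?thesis using 3 cnt by (simp add: sw_def)
    qed
  qed
  show ?thesis unfolding ssyt_def using z' pos' rc cnt' by blast
qed

lemma gt_gt: "gt la i (gt la i T) = T"
proof -
  let ?T' = "gt la i T"
  have r1: "rho la ?T' (i - 1) = rho la T (i - 1)" using im1 by (intro ext) (simp add: rho_gt Rg_def)
  have r2: "rho la ?T' (Suc i) = rho la T (Suc i)" by (intro ext) (simp add: rho_gt Rg_def)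
  have r3: "rho la ?T' i = rp la T i" by (intro ext) (simp add: rho_gt Rg_def)
  have rp2: "rp la ?T' i r = rho la T i r" for r
    using gt_bounds[of r] unfolding rp_def lo_def hi_def r1 r2 r3 by (simp add: rp_def lo_def hi_def)
  show ?thesis
  proof
    fix p :: "nat \<times> nat"
    obtain r c where p: "p = (r, c)" by force
    show "gt la i ?T' p = T p"
    proof (cases "(r, c) \<in> cells la \<and> (T (r, c) = i \<or> T (r, c) = Suc i)")
      case True
      have "T (r, c) \<le> i \<longleftrightarrow> c < rho la T i r" using thr_ssyt[OF ss] True by blast
      then show ?thesis using True p rp2 by (auto simp: gt_def)
    next
      case False
      then show ?thesis using p by (auto simp: gt_def)
    qed
  qed
qed

end

lemma schur_sw:
  assumes "is_partition la" "1 \<le> i"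
  shows "schur la (a \<circ> sw i) = schur la a"
proof -
  have swsw: "a \<circ> sw i \<circ> sw i = a" by (auto simp: sw_def fun_eq_iff)
  have "bij_betw (gt la i) (ssyt la a) (ssyt la (a \<circ> sw i))"
  proof (rule bij_betw_byWitness[where f' = "gt la i"])
    show "\<forall>T\<in>ssyt la a. gt la i (gt la i T) = T" using gt_gt assms by blast
    show "\<forall>T\<in>ssyt la (a \<circ> sw i). gt la i (gt la i T) = T" using gt_gt assms by blast
    show "gt la i ` ssyt la a \<subseteq> ssyt la (a \<circ> sw i)" using gt_ssyt assms by blast
    show "gt la i ` ssyt la (a \<circ> sw i) \<subseteq> ssyt la a" using gt_ssyt[of _ la "a \<circ> sw i" i] assms swsw by auto
  qed
  then show ?thesis unfolding schur_def by (simp add: bij_betw_same_card)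
qed

definition pf :: "nat list \<Rightarrow> nat \<Rightarrow> nat" where
  "pf mu i = (if 1 \<le> i \<and> i \<le> length mu then mu ! (i - 1) else 0)"

definition content2 :: "nat \<Rightarrow> nat \<Rightarrow> nat \<Rightarrow> nat" where
  "content2 p q i = (if i = 1 then p else if i = 2 then q else 0)"

definition tsum :: "nat \<Rightarrow> nat list \<Rightarrow> nat" where
  "tsum j xs = sum_list (take j xs)"

lemma ssyt_pos: "T \<in> ssyt la a \<Longrightarrow> p \<in> cells la \<Longrightarrow> 1 \<le> T p"
  by (simp add: ssyt_def)

lemma ssyt_cnt: "T \<in> ssyt la a \<Longrightarrow> a v = card {p \<in> cells la. T p = v}"
  by (simp add: ssyt_def)

lemma ssyt_row_ge:
  assumes "T \<in> ssyt la a" "is_partition la" "(r, c) \<in> cells la"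
  shows "Suc r \<le> T (r, c)"
  using assms(3)
proof (induction r)
  case 0 then show ?case using ssyt_pos[OF assms(1)] by simp
next
  case (Suc r)
  have "(r, c) \<in> cells la" using part_cell_up[OF assms(2) Suc.prems] .
  then have "Suc r \<le> T (r, c)" by (rule Suc.IH)
  also have "T (r, c) < T (Suc r, c)" using assms(1) Suc.prems by (simp add: ssyt_def)
  finally show ?case by simp
qed

lemma card_le_j:
  assumes "T \<in> ssyt la a"
  shows "card {p \<in> cells la. T p \<le> j} = (\<Sum>v<j. a (Suc v))"
proof (induction j)
  case 0
  have e: "{p \<in> cells la. T p \<le> 0} = {}" using ssyt_pos[OF assms] by fastforce
  show ?case unfolding e by simp
next
  case (Suc j)
  have "{p \<in> cells la. T p \<le> Suc j} = {p \<in> cells la. T p \<le> j} \<union> {p \<in> cells la. T p = Suc j}"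
    by auto
  also have "card \<dots> = card {p \<in> cells la. T p \<le> j} + card {p \<in> cells la. T p = Suc j}"
    by (rule card_Un_disjoint) (auto intro: finite_subset[OF _ finite_cells])
  finally have "card {p \<in> cells la. T p \<le> Suc j} = card {p \<in> cells la. T p \<le> j} + card {p \<in> cells la. T p = Suc j}" .
  then show ?case using Suc ssyt_cnt[OF assms, of "Suc j"] by simp
qed

lemma card_rows_lt: "card {p \<in> cells la. fst p < j} = tsum j la"
proof (induction j)
  case 0 then show ?case by (simp add: tsum_def)
next
  case (Suc j)
  have "{p \<in> cells la. fst p < Suc j} = {p \<in> cells la. fst p < j} \<union> {p \<in> cells la. fst p = j}"
    by auto
  also have "card \<dots> = card {p \<in> cells la. fst p < j} + card {p \<in> cells la. fst p = j}"
    by (rule card_Un_disjoint) (auto intro: finite_subset[OF _ finite_cells])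
  finally have "card {p \<in> cells la. fst p < Suc j} = card {p \<in> cells la. fst p < j} + card {p \<in> cells la. fst p = j}" .
  moreover have "{p \<in> cells la. fst p = j} = (\<lambda>c. (j, c)) ` (if j < length la then {..<la ! j} else {})"
    by (auto simp: cells_iff)
  moreover have "card ((\<lambda>c. (j, c)) ` (if j < length la then {..<la ! j} else {})) = (if j < length la then la ! j else 0)"
    by (subst card_image) (auto simp: inj_on_def)
  ultimately show ?case using Suc by (simp add: tsum_def take_Suc_conv_app_nth)
qed

lemma sum_pf: "(\<Sum>v<j. pf mu (Suc v)) = tsum j mu"
  by (induction j) (auto simp: pf_def tsum_def take_Suc_conv_app_nth)

lemma ssyt_le_rows:
  assumes "T \<in> ssyt la a" "is_partition la"
  shows "{p \<in> cells la. T p \<le> j} \<subseteq> {p \<in> cells la. fst p < j}"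
  using ssyt_row_ge[OF assms] by fastforce

lemma dominance:
  assumes "T \<in> ssyt la (pf mu)" "is_partition la"
  shows "tsum j mu \<le> tsum j la"
proof -
  have "tsum j mu = card {p \<in> cells la. T p \<le> j}" using card_le_j[OF assms(1)] sum_pf by simp
  also have "\<dots> \<le> card {p \<in> cells la. fst p < j}"
    by (rule card_mono[OF _ ssyt_le_rows[OF assms]]) (auto intro: finite_subset[OF _ finite_cells])
  finally show ?thesis using card_rows_lt by simp
qed

definition T0 :: "nat list \<Rightarrow> nat \<times> nat \<Rightarrow> nat" where
  "T0 la = (\<lambda>(r, c). if (r, c) \<in> cells la then Suc r else 0)"

lemma ssyt_diag_unique:
  assumes "T \<in> ssyt mu (pf mu)" "is_partition mu"
  shows "T = T0 mu"
proof
  fix p :: "nat \<times> nat"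
  obtain r c where p: "p = (r, c)" by (cases p)
  show "T p = T0 mu p"
  proof (cases "(r, c) \<in> cells mu")
    case True
    let ?j = "Suc r"
    have fin: "finite {p \<in> cells mu. fst p < ?j}" by (auto intro: finite_subset[OF _ finite_cells])
    have "card {p \<in> cells mu. T p \<le> ?j} = card {p \<in> cells mu. fst p < ?j}"
      using card_le_j[OF assms(1)] sum_pf card_rows_lt by simp
    then have eq: "{p \<in> cells mu. T p \<le> ?j} = {p \<in> cells mu. fst p < ?j}"
      using card_subset_eq[OF fin ssyt_le_rows[OF assms]] by simp
    have "(r, c) \<in> {p \<in> cells mu. fst p < ?j}" using True by simp
    then have "(r, c) \<in> {p \<in> cells mu. T p \<le> ?j}" by (simp only: eq)
    then have "T (r, c) \<le> Suc r" by simp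
    moreover have "Suc r \<le> T (r, c)" by (rule ssyt_row_ge[OF assms True])
    ultimately show ?thesis using True p by (simp add: T0_def)
  next
    case False
    then show ?thesis using assms(1) p by (simp add: T0_def ssyt_def)
  qed
qed

lemma T0_ssyt:
  assumes "is_partition mu"
  shows "T0 mu \<in> ssyt mu (pf mu)"
proof -
  have cnt: "pf mu v = card {p \<in> cells mu. T0 mu p = v}" for v
  proof (cases v)
    case 0
    have e: "{p \<in> cells mu. T0 mu p = v} = {}" using 0 by (force simp: T0_def)
    show ?thesis unfolding e using 0 by (simp add: pf_def)
  next
    case (Suc w)
    have "{p \<in> cells mu. T0 mu p = v} = (\<lambda>c. (w, c)) ` (if w < length mu then {..<mu ! w} else {})"
      using Suc by (auto simp: T0_def cells_iff split: prod.splits)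
    moreover have "card ((\<lambda>c. (w, c)) ` (if w < length mu then {..<mu ! w} else {})) = (if w < length mu then mu ! w else 0)"
      by (subst card_image) (auto simp: inj_on_def)
    ultimately show ?thesis using Suc by (simp add: pf_def)
  qed
  have z: "\<forall>p. p \<notin> cells mu \<longrightarrow> T0 mu p = 0" by (auto simp: T0_def)
  have o: "\<forall>p\<in>cells mu. 1 \<le> T0 mu p" by (auto simp: T0_def)
  have r: "\<forall>r c. (r, Suc c) \<in> cells mu \<longrightarrow> T0 mu (r, c) \<le> T0 mu (r, Suc c)"
  proof (intro allI impI)
    fix r c assume "(r, Suc c) \<in> cells mu"
    then have "(r, c) \<in> cells mu" by (simp add: cells_iff)
    with \<open>(r, Suc c) \<in> cells mu\<close> show "T0 mu (r, c) \<le> T0 mu (r, Suc c)" by (simp add: T0_def)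
  qed
  have c: "\<forall>r c. (Suc r, c) \<in> cells mu \<longrightarrow> T0 mu (r, c) < T0 mu (Suc r, c)"
  proof (intro allI impI)
    fix r c assume a: "(Suc r, c) \<in> cells mu"
    then have "(r, c) \<in> cells mu" by (rule part_cell_up[OF assms])
    with a show "T0 mu (r, c) < T0 mu (Suc r, c)" by (simp add: T0_def)
  qed
  show ?thesis unfolding ssyt_def using z o r c cnt by blast
qed

lemma schur_diag: "is_partition mu \<Longrightarrow> schur mu (pf mu) = 1"
proof -
  assume a: "is_partition mu"
  have "ssyt mu (pf mu) = {T0 mu}"
  proof
    show "ssyt mu (pf mu) \<subseteq> {T0 mu}" using ssyt_diag_unique[OF _ a] by blast
    show "{T0 mu} \<subseteq> ssyt mu (pf mu)" using T0_ssyt[OF a] by simp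
  qed
  then show ?thesis by (simp add: schur_def)
qed

lemma schur_dom:
  assumes "schur la (pf mu) \<noteq> 0" "is_partition la"
  shows "tsum j mu \<le> tsum j la"
proof -
  from assms(1) have "ssyt la (pf mu) \<noteq> {}" by (auto simp: schur_def)
  then obtain T where "T \<in> ssyt la (pf mu)" by blast
  then show ?thesis using dominance assms(2) by blast
qed

definition good :: "nat \<Rightarrow> (nat \<Rightarrow> nat) \<Rightarrow> bool" where
  "good d a \<longleftrightarrow> a 0 = 0 \<and> finite {i. 0 < a i} \<and> sum a {i. 0 < a i} = d"

lemma card_cells: "card (cells la) = sum_list la"
proof -
  have "cells la = {p \<in> cells la. fst p < length la}" by (auto simp: cells_iff)
  then show ?thesis using card_rows_lt[of la "length la"] by (simp add: tsum_def)
qed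

lemma schur_good:
  assumes "schur la a \<noteq> 0"
  shows "good (sum_list la) a"
proof -
  from assms have "ssyt la a \<noteq> {}" by (auto simp: schur_def)
  then obtain T where T: "T \<in> ssyt la a" by blast
  have a0: "a 0 = 0"
  proof -
    have e: "{p \<in> cells la. T p = 0} = {}" using ssyt_pos[OF T] by fastforce
    show ?thesis unfolding ssyt_cnt[OF T, of 0] e by simp
  qed
  have supp: "{i. 0 < a i} = T ` cells la"
  proof (rule set_eqI)
    fix i
    have fin: "finite {p \<in> cells la. T p = i}" using finite_cells by simp
    have "0 < a i \<longleftrightarrow> {p \<in> cells la. T p = i} \<noteq> {}"
      unfolding ssyt_cnt[OF T, of i] by (simp only: card_gt_0_iff fin simp_thms)
    also have "\<dots> \<longleftrightarrow> i \<in> T ` cells la" by (auto simp: image_iff)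
    finally show "i \<in> {i. 0 < a i} \<longleftrightarrow> i \<in> T ` cells la" by simp
  qed
  have "sum a {i. 0 < a i} = (\<Sum>i\<in>T ` cells la. card {p \<in> cells la. T p = i})"
    unfolding supp by (rule sum.cong[OF refl]) (rule ssyt_cnt[OF T])
  also have "\<dots> = card (cells la)"
    using sum.group[OF finite_cells finite_imageI[OF finite_cells] subset_refl, where g=T and h="\<lambda>_. 1::nat"]
    by (simp only: card_eq_sum)
  finally have "sum a {i. 0 < a i} = sum_list la" using card_cells by simp
  moreover have "finite {i. 0 < a i}" unfolding supp using finite_cells by simp
  ultimately show ?thesis unfolding good_def using a0 by blast
qed

definition tw :: "nat \<Rightarrow> nat \<Rightarrow> nat list" where
  "tw d s = (if s = 0 then [d] else [d - s, s])"

definition T2 :: "nat list \<Rightarrow> nat \<Rightarrow> nat \<times> nat \<Rightarrow> nat" where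
  "T2 la p = (\<lambda>(r, c). if (r, c) \<in> cells la then (if r = 0 \<and> c < p then 1 else 2) else 0)"

lemma two_unique:
  assumes T: "T \<in> ssyt la (content2 p q)" and pa: "is_partition la"
  shows "T = T2 la p"
proof -
  have vals: "T x = 1 \<or> T x = 2" if x: "x \<in> cells la" for x
  proof -
    have "finite {y \<in> cells la. T y = T x}" using finite_cells by simp
    moreover have "{y \<in> cells la. T y = T x} \<noteq> {}" using x by blast
    ultimately have "card {y \<in> cells la. T y = T x} > 0" using card_gt_0_iff by blast
    then have "content2 p q (T x) > 0" using ssyt_cnt[OF T, of "T x"] by simp
    then show ?thesis by (auto simp: content2_def split: if_splits)
  qed
  have row1: "T (r, c) = 2" if "(r, c) \<in> cells la" "r \<ge> 1" for r c
    using vals[OF that(1)] ssyt_row_ge[OF T pa that(1)] that(2) by auto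
  have "{x \<in> cells la. T x \<le> 1} = (\<lambda>c. (0, c)) ` {c. (0, c) \<in> cells la \<and> T (0, c) \<le> 1}"
  proof (rule set_eqI)
    fix x :: "nat \<times> nat"
    obtain r c where x: "x = (r, c)" by (cases x)
    show "x \<in> {x \<in> cells la. T x \<le> 1} \<longleftrightarrow> x \<in> (\<lambda>c. (0, c)) ` {c. (0, c) \<in> cells la \<and> T (0, c) \<le> 1}"
      using row1[of r c] x by (cases r) auto
  qed
  then have "card {x \<in> cells la. T x \<le> 1} = rho la T 1 0"
    unfolding rho_def by (simp add: card_image inj_on_def)
  moreover have "card {x \<in> cells la. T x \<le> 1} = p" using card_le_j[OF T, of 1] by (simp add: content2_def)
  ultimately have rp: "rho la T 1 0 = p" by simp
  show ?thesis
  proof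
    fix x :: "nat \<times> nat"
    obtain r c where x: "x = (r, c)" by (cases x)
    show "T x = T2 la p x"
    proof (cases "x \<in> cells la")
      case False
      then show ?thesis using T by (auto simp: ssyt_def T2_def x)
    next
      case True
      show ?thesis
      proof (cases r)
        case 0
        have "T (0, c) \<le> 1 \<longleftrightarrow> c < p" using thr_ssyt[OF T, of 0 c 1] True x 0 rp by simp
        then show ?thesis using vals[OF True] True x 0 by (auto simp: T2_def)
      next
        case (Suc r')
        then show ?thesis using row1[of r c] True x by (simp add: T2_def)
      qed
    qed
  qed
qed

lemma pf_two: "pf [x, y] = content2 x y"
  by (auto simp: pf_def content2_def fun_eq_iff)

lemma tw_cells: "(r, c) \<in> cells (tw d s) \<longleftrightarrow> (r = 0 \<and> c < d - s) \<or> (r = 1 \<and> c < s)"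
  by (cases s) (auto simp: tw_def cells_iff nth_Cons split: nat.splits)

lemma tw_part: "s \<le> d - s \<Longrightarrow> 1 \<le> d \<Longrightarrow> tw d s \<in> partitions_of d"
  by (auto simp: tw_def partitions_of_def is_partition_def)

lemma T2_ssyt:
  assumes "s \<le> r" "2 * r \<le> d"
  shows "T2 (tw d s) (d - r) \<in> ssyt (tw d s) (content2 (d - r) r)"
proof -
  let ?la = "tw d s" and ?T = "T2 (tw d s) (d - r)"
  have z: "\<forall>p. p \<notin> cells ?la \<longrightarrow> ?T p = 0" by (auto simp: T2_def)
  have o: "\<forall>p\<in>cells ?la. 1 \<le> ?T p" by (auto simp: T2_def)
  have rw: "\<forall>r' c. (r', Suc c) \<in> cells ?la \<longrightarrow> ?T (r', c) \<le> ?T (r', Suc c)"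
    by (auto simp: T2_def tw_cells)
  have cl: "\<forall>r' c. (Suc r', c) \<in> cells ?la \<longrightarrow> ?T (r', c) < ?T (Suc r', c)"
    using assms by (auto simp: T2_def tw_cells)
  have e1: "{x \<in> cells ?la. ?T x = 1} = (\<lambda>c. (0, c)) ` {..<d - r}"
  proof (rule set_eqI)
    fix x :: "nat \<times> nat"
    obtain a b where x: "x = (a, b)" by (cases x)
    show "x \<in> {x \<in> cells ?la. ?T x = 1} \<longleftrightarrow> x \<in> (\<lambda>c. (0, c)) ` {..<d - r}"
      unfolding x using assms by (auto simp: T2_def tw_cells)
  qed
  have c1: "card {x \<in> cells ?la. ?T x = 1} = d - r"
    unfolding e1 by (simp add: card_image inj_on_def)
  have un: "cells ?la = {x \<in> cells ?la. ?T x = 1} \<union> {x \<in> cells ?la. ?T x = 2}"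
    by (auto simp: T2_def split: prod.splits)
  have "card (cells ?la) = d" using card_cells[of ?la] assms by (simp add: tw_def)
  also have "card (cells ?la) = card {x \<in> cells ?la. ?T x = 1} + card {x \<in> cells ?la. ?T x = 2}"
    by (subst un, rule card_Un_disjoint) (auto intro: finite_subset[OF _ finite_cells])
  finally have c2: "card {x \<in> cells ?la. ?T x = 2} = r" using c1 assms by simp
  have cnt: "content2 (d - r) r v = card {x \<in> cells ?la. ?T x = v}" for v
  proof -
    consider "v = 1" | "v = 2" | "v \<noteq> 1" "v \<noteq> 2" by blast
    then show ?thesis
    proof cases
      case 3
      have e: "{x \<in> cells ?la. ?T x = v} = {}" using 3 by (auto simp: T2_def split: prod.splits)
      show ?thesis unfolding e using 3 by (simp add: content2_def)
    qed (use c1 c2 in \<open>auto simp: content2_def\<close>)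
  qed
  show ?thesis unfolding ssyt_def using z o rw cl cnt by blast
qed

lemma schur_two:
  assumes "2 * r \<le> d" "nu \<in> partitions_of d" "1 \<le> d"
  shows "schur nu (content2 (d - r) r) = (if \<exists>s\<le>r. nu = tw d s then 1 else 0)"
proof (cases "\<exists>s\<le>r. nu = tw d s")
  case True
  then obtain s where s: "s \<le> r" "nu = tw d s" by blast
  have pa: "is_partition nu" using assms(2) by (simp add: partitions_of_def)
  have "ssyt nu (content2 (d - r) r) = {T2 nu (d - r)}"
  proof
    show "ssyt nu (content2 (d - r) r) \<subseteq> {T2 nu (d - r)}" using two_unique[OF _ pa] by blast
    show "{T2 nu (d - r)} \<subseteq> ssyt nu (content2 (d - r) r)" using T2_ssyt[OF s(1) assms(1)] s(2) by simp
  qed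
  then show ?thesis using True by (simp add: schur_def)
next
  case False
  have pa: "is_partition nu" and sm: "sum_list nu = d" using assms(2) by (auto simp: partitions_of_def)
  have "schur nu (content2 (d - r) r) = 0"
  proof (rule ccontr)
    assume ne: "schur nu (content2 (d - r) r) \<noteq> 0"
    then have ne': "schur nu (pf [d - r, r]) \<noteq> 0" by (simp add: pf_two)
    have t1: "d - r \<le> tsum 1 nu" using schur_dom[OF ne' pa, of 1] by (simp add: tsum_def)
    have t2: "d \<le> tsum 2 nu" using schur_dom[OF ne' pa, of 2] assms(1) by (simp add: tsum_def)
    show False
    proof (cases nu)
      case Nil then show False using sm assms(3) by simp
    next
      case (Cons x xs)
      show False
      proof (cases xs)
        case Nil
        then have "nu = tw d 0" using Cons sm by (simp add: tw_def)
        then show False using False by auto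
      next
        case (Cons y ys)
        note nu = \<open>nu = x # xs\<close> Cons
        show False
        proof (cases ys)
          case Nil
          have "y > 0" using pa nu by (simp add: is_partition_def)
          moreover have "x + y = d" using sm nu Nil by simp
          moreover have "d - r \<le> x" using t1 nu by (simp add: tsum_def)
          ultimately have "nu = tw d y" "y \<le> r" using nu Nil assms(1) by (auto simp: tw_def)
          then show False using False by auto
        next
          case (Cons z zs)
          have "z > 0" using pa nu Cons by (simp add: is_partition_def)
          moreover have "x + y \<ge> d" using t2 nu by (simp add: tsum_def)
          ultimately show False using sm nu Cons by simp
        qed
      qed
    qed
  qed
  then show ?thesis using False by simp
qed

lemma tri_exists:
  fixes K :: "'a \<Rightarrow> 'a \<Rightarrow> int" and rk :: "'a \<Rightarrow> nat"
  assumes "finite P" "\<forall>m\<in>P. K m m = 1"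
    "\<forall>n\<in>P. \<forall>m\<in>P. K n m \<noteq> 0 \<longrightarrow> n \<noteq> m \<longrightarrow> rk m < rk n"
  shows "\<exists>c. (\<forall>x. x \<notin> P \<longrightarrow> c x = 0) \<and> (\<forall>m\<in>P. (\<Sum>n\<in>P. c n * K n m) = g m)"
  using assms
proof (induction P arbitrary: g rule: finite_ranking_induct[where f = rk])
  case empty
  then show ?case by (intro exI[of _ "\<lambda>_. 0"]) simp
next
  case (insert x S)
  show ?case
  proof (cases "x \<in> S")
    case True
    then show ?thesis using insert by (simp add: insert_absorb)
  next
    case xS: False
    have K0: "K n x = 0" if "n \<in> S" for n
    proof (rule ccontr)
      assume "K n x \<noteq> 0"
      moreover have "n \<noteq> x" using that xS by auto
      ultimately have "rk x < rk n" using insert.prems(2) that by auto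
      with insert.hyps(2)[OF that] show False by simp
    qed
    obtain c' where c': "\<forall>y. y \<notin> S \<longrightarrow> c' y = 0"
      "\<forall>m\<in>S. (\<Sum>n\<in>S. c' n * K n m) = g m - g x * K x m"
      using insert.IH[of "\<lambda>m. g m - g x * K x m"] insert.prems by auto
    define c where "c = c'(x := g x)"
    have sumS: "(\<Sum>n\<in>S. c n * K n m) = (\<Sum>n\<in>S. c' n * K n m)" for m
      using xS by (intro sum.cong) (auto simp: c_def)
    have "\<forall>m\<in>insert x S. (\<Sum>n\<in>insert x S. c n * K n m) = g m"
    proof
      fix m assume m: "m \<in> insert x S"
      have "(\<Sum>n\<in>insert x S. c n * K n m) = g x * K x m + (\<Sum>n\<in>S. c' n * K n m)"
        using insert.hyps(1) xS sumS by (simp add: c_def)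
      also have "\<dots> = g m"
      proof (cases "m = x")
        case True
        have "(\<Sum>n\<in>S. c' n * K n m) = 0" using K0 True by simp
        then show ?thesis using True insert.prems(1) by simp
      next
        case False
        then show ?thesis using c'(2) m by simp
      qed
      finally show "(\<Sum>n\<in>insert x S. c n * K n m) = g m" .
    qed
    moreover have "\<forall>y. y \<notin> insert x S \<longrightarrow> c y = 0" using c'(1) by (simp add: c_def)
    ultimately show ?thesis by blast
  qed
qed

lemma tri_unique:
  fixes K :: "'a \<Rightarrow> 'a \<Rightarrow> int" and rk :: "'a \<Rightarrow> nat"
  assumes "finite P" "\<forall>m\<in>P. K m m = 1"
    "\<forall>n\<in>P. \<forall>m\<in>P. K n m \<noteq> 0 \<longrightarrow> n \<noteq> m \<longrightarrow> rk m < rk n"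
    "\<forall>x. x \<notin> P \<longrightarrow> e x = 0" "\<forall>m\<in>P. (\<Sum>n\<in>P. e n * K n m) = 0"
  shows "e y = 0"
  using assms
proof (induction P arbitrary: e rule: finite_ranking_induct[where f = rk])
  case empty
  then show ?case by simp
next
  case (insert x S)
  show ?case
  proof (cases "x \<in> S")
    case True
    then show ?thesis using insert by (simp add: insert_absorb)
  next
    case xS: False
    have K0: "K n x = 0" if "n \<in> S" for n
    proof (rule ccontr)
      assume "K n x \<noteq> 0"
      moreover have "n \<noteq> x" using that xS by auto
      ultimately have "rk x < rk n" using insert.prems(2) that by auto
      with insert.hyps(2)[OF that] show False by simp
    qed
    have "(\<Sum>n\<in>insert x S. e n * K n x) = 0" using insert.prems(4) by simp
    then have "e x * K x x + (\<Sum>n\<in>S. e n * K n x) = 0" using insert.hyps(1) xS by simp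
    then have ex: "e x = 0" using K0 insert.prems(1) by simp
    have "\<forall>m\<in>S. (\<Sum>n\<in>S. e n * K n m) = 0"
    proof
      fix m assume "m \<in> S"
      then have "(\<Sum>n\<in>insert x S. e n * K n m) = 0" using insert.prems(4) by simp
      then show "(\<Sum>n\<in>S. e n * K n m) = 0" using insert.hyps(1) xS ex by simp
    qed
    moreover have "\<forall>z. z \<notin> S \<longrightarrow> e z = 0" using insert.prems(3) ex by auto
    ultimately show ?thesis using insert.IH[of e] insert.prems(1,2) by blast
  qed
qed

lemma part_len_le: "\<forall>x\<in>set xs. 0 < x \<Longrightarrow> length xs \<le> sum_list (xs :: nat list)"
  by (induction xs) auto

lemma finite_partitions: "finite (partitions_of d)"
proof -
  have "partitions_of d \<subseteq> {xs. set xs \<subseteq> {..d} \<and> length xs \<le> d}"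
    by (auto simp: partitions_of_def is_partition_def intro: member_le_sum_list part_len_le)
  then show ?thesis by (rule finite_subset) (rule finite_lists_length_le, simp)
qed

lemma tsum_Suc: "tsum (Suc k) xs = tsum k xs + (if k < length xs then xs ! k else 0)"
  by (simp add: tsum_def take_Suc_conv_app_nth)

lemma tsum_eq_imp:
  assumes "nu \<in> partitions_of d" "mu \<in> partitions_of d" "\<forall>j\<le>d. tsum j nu = tsum j mu"
  shows "nu = mu"
proof -
  have pn: "\<forall>x\<in>set nu. 0 < x" "sum_list nu = d" and pm: "\<forall>x\<in>set mu. 0 < x" "sum_list mu = d"
    using assms(1,2) by (auto simp: partitions_of_def is_partition_def)
  have ln: "length nu \<le> d" using part_len_le[OF pn(1)] pn(2) by simp
  have lm: "length mu \<le> d" using part_len_le[OF pm(1)] pm(2) by simp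
  have e: "(if k < length nu then nu ! k else 0) = (if k < length mu then mu ! k else 0)" if "k < d" for k
    using assms(3) tsum_Suc[of k nu] tsum_Suc[of k mu] that by simp
  have l: "length nu = length mu"
  proof (rule ccontr)
    assume "length nu \<noteq> length mu"
    then consider "length nu < length mu" | "length mu < length nu" by linarith
    then show False
    proof cases
      case 1
      then have "mu ! length nu > 0" using pm by auto
      then show False using e[of "length nu"] 1 lm by simp
    next
      case 2
      then have "nu ! length mu > 0" using pn by auto
      then show False using e[of "length mu"] 2 ln by simp
    qed
  qed
  show ?thesis
  proof (rule nth_equalityI[OF l])
    fix k assume "k < length nu"
    then show "nu ! k = mu ! k" using e[of k] l ln by simp
  qed
qed

definition rk :: "nat \<Rightarrow> nat list \<Rightarrow> nat" where
  "rk d nu = (\<Sum>j\<le>d. tsum j nu)"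

lemma K_conds:
  shows "\<forall>m\<in>partitions_of d. schur m (pf m) = 1"
    and "\<forall>n\<in>partitions_of d. \<forall>m\<in>partitions_of d. schur n (pf m) \<noteq> 0 \<longrightarrow> n \<noteq> m \<longrightarrow> rk d m < rk d n"
proof -
  show "\<forall>m\<in>partitions_of d. schur m (pf m) = 1" using schur_diag by (auto simp: partitions_of_def)
  show "\<forall>n\<in>partitions_of d. \<forall>m\<in>partitions_of d. schur n (pf m) \<noteq> 0 \<longrightarrow> n \<noteq> m \<longrightarrow> rk d m < rk d n"
  proof (intro ballI impI)
    fix n m assume n: "n \<in> partitions_of d" and m: "m \<in> partitions_of d"
      and ne: "schur n (pf m) \<noteq> 0" and nm: "n \<noteq> m"
    have pa: "is_partition n" using n by (simp add: partitions_of_def)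
    have le: "tsum j m \<le> tsum j n" for j using schur_dom[OF ne pa] .
    have "\<exists>j\<le>d. tsum j n \<noteq> tsum j m" using tsum_eq_imp[OF n m] nm by blast
    then obtain j where j: "j \<le> d" "tsum j m < tsum j n" using le le_neq_implies_less by metis
    have "rk d m = (\<Sum>i\<in>{..d}. tsum i m)" by (simp add: rk_def)
    also have "\<dots> < (\<Sum>i\<in>{..d}. tsum i n)"
      by (rule sum_strict_mono_ex1) (use le j in auto)
    finally show "rk d m < rk d n" by (simp add: rk_def)
  qed
qed

lemma sw_inv: "sw i (sw i j) = j"
  by (auto simp: sw_def)

lemma sorted_case:
  fixes b :: "nat \<Rightarrow> nat"
  assumes b0: "b 0 = 0" and bN: "\<forall>i>N. b i = 0" and sN: "sum b {..N} = d"
    and srt: "\<forall>i\<ge>1. b (Suc i) \<le> b i"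
  shows "\<exists>mu\<in>partitions_of d. pf mu = b"
proof -
  have ex: "\<exists>k. b (Suc k) = 0" using bN by auto
  define L where "L = (LEAST k. b (Suc k) = 0)"
  have pos: "0 < b (Suc k)" if "k < L" for k
    using not_less_Least[of k "\<lambda>k. b (Suc k) = 0"] that unfolding L_def by simp
  have mono: "b (Suc k') \<le> b (Suc k)" if "k \<le> k'" for k k'
    using that
  proof (induction k' rule: dec_induct)
    case (step m)
    then show ?case using srt[rule_format, of "Suc m"] by simp
  qed simp
  have zero: "b (Suc k) = 0" if "L \<le> k" for k
    using mono[OF that] LeastI_ex[OF ex] unfolding L_def[symmetric] by simp
  have LN: "L \<le> N" unfolding L_def by (rule Least_le) (use bN in simp)
  define mu where "mu = map (\<lambda>k. b (Suc k)) [0..<L]"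
  have pf: "pf mu = b"
  proof
    fix i show "pf mu i = b i"
    proof (cases i)
      case 0 then show ?thesis using b0 by (simp add: pf_def)
    next
      case (Suc k)
      then show ?thesis using zero[of k] by (auto simp: pf_def mu_def)
    qed
  qed
  have ip: "is_partition mu"
    unfolding is_partition_def
  proof
    show "sorted_wrt (\<ge>) mu" unfolding sorted_wrt_iff_nth_less using mono by (auto simp: mu_def)
    show "\<forall>x\<in>set mu. 0 < x" using pos by (auto simp: mu_def)
  qed
  have "sum_list mu = (\<Sum>k<L. b (Suc k))"
    unfolding mu_def interv_sum_list_conv_sum_set_nat by (simp add: atLeast0LessThan)
  also have "\<dots> = (\<Sum>k<N. b (Suc k))"
    by (rule sum.mono_neutral_left) (use LN zero in auto)
  also have "\<dots> = sum b {..<Suc N}" unfolding sum.lessThan_Suc_shift using b0 by simp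
  also have "\<dots> = d" using sN by (simp add: lessThan_Suc_atMost)
  finally have "mu \<in> partitions_of d" using ip by (simp add: partitions_of_def)
  then show ?thesis using pf by blast
qed

lemma sort_zero:
  fixes G :: "(nat \<Rightarrow> nat) \<Rightarrow> int"
  assumes sym: "\<And>a i. 1 \<le> i \<Longrightarrow> G (a \<circ> sw i) = G a"
    and base: "\<And>mu. mu \<in> partitions_of d \<Longrightarrow> G (pf mu) = 0"
    and g: "good d a"
  shows "G a = 0"
proof -
  have fin: "finite {i. 0 < a i}" and sa: "sum a {i. 0 < a i} = d" and a0: "a 0 = 0"
    using g by (auto simp: good_def)
  obtain N where N: "\<forall>i\<in>{i. 0 < a i}. i \<le> N" using fin finite_nat_set_iff_bounded_le by blast
  have aN: "\<forall>i>N. a i = 0"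
  proof (intro allI impI)
    fix i assume "N < i"
    then show "a i = 0" using N by (metis gr0I mem_Collect_eq not_le)
  qed
  have sN: "sum a {..N} = d"
  proof -
    have "sum a {i. 0 < a i} = sum a {..N}"
      by (rule sum.mono_neutral_left) (use N in auto)
    then show ?thesis using sa by simp
  qed
  have main: "\<And>b. (\<Sum>i\<le>N. i * b i) = m \<Longrightarrow> b 0 = 0 \<Longrightarrow> (\<forall>i>N. b i = 0) \<Longrightarrow> sum b {..N} = d \<Longrightarrow> G b = 0" for m
  proof (induction m rule: less_induct)
    case (less m)
    fix b :: "nat \<Rightarrow> nat"
    assume phi: "(\<Sum>i\<le>N. i * b i) = m" and b0: "b 0 = 0" and bN: "\<forall>i>N. b i = 0" and sb: "sum b {..N} = d"
    show "G b = 0"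
    proof (cases "\<exists>i\<ge>1. b i < b (Suc i)")
      case False
      then have "\<forall>i\<ge>1. b (Suc i) \<le> b i" by (auto simp: not_less)
      then obtain mu where "mu \<in> partitions_of d" "pf mu = b" using sorted_case[OF b0 bN sb] by blast
      then show ?thesis using base[of mu] by simp
    next
      case True
      then obtain i where i: "1 \<le> i" "b i < b (Suc i)" by blast
      have iN: "Suc i \<le> N"
      proof (rule ccontr)
        assume "\<not> Suc i \<le> N"
        then have "b (Suc i) = 0" using bN by simp
        then show False using i(2) by simp
      qed
      define b' where "b' = b \<circ> sw i"
      have bb: "b' \<circ> sw i = b" by (auto simp: b'_def sw_inv fun_eq_iff)
      have b'0: "b' 0 = 0" using b0 i by (simp add: b'_def sw_def)
      have b'N: "\<forall>j>N. b' j = 0" using bN iN by (auto simp: b'_def sw_def)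
      have reidx: "(\<Sum>j\<le>N. h (sw i j)) = (\<Sum>j\<le>N. h j)" for h :: "nat \<Rightarrow> nat"
        by (rule sum.reindex_bij_witness[of _ "sw i" "sw i"]) (use iN in \<open>auto simp: sw_inv sw_def\<close>)
      have sb': "sum b' {..N} = d" using reidx[of b] sb by (simp add: b'_def)
      let ?R = "{..N} - {i, Suc i}"
      have split: "(\<Sum>j\<le>N. h j) = (\<Sum>j\<in>?R. h j) + h i + h (Suc i)" for h :: "nat \<Rightarrow> nat"
      proof -
        have "{..N} = insert i (insert (Suc i) ?R)" using iN by auto
        have "(\<Sum>j\<in>insert i (insert (Suc i) ?R). h j) = h i + (h (Suc i) + (\<Sum>j\<in>?R. h j))"
          by (simp add: sum.insert_remove)
        then show ?thesis using \<open>{..N} = _\<close> by simp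
      qed
      have eqR: "(\<Sum>j\<in>?R. j * b' j) = (\<Sum>j\<in>?R. j * b j)"
        by (rule sum.cong) (auto simp: b'_def sw_def)
      have "(\<Sum>j\<le>N. j * b' j) = (\<Sum>j\<in>?R. j * b j) + i * b (Suc i) + Suc i * b i"
        using split[of "\<lambda>j. j * b' j"] eqR by (simp add: b'_def sw_def)
      also have "\<dots> < (\<Sum>j\<in>?R. j * b j) + i * b i + Suc i * b (Suc i)"
        using i(2) by simp
      also have "\<dots> = m" using split[of "\<lambda>j. j * b j"] phi by simp
      finally have lt: "(\<Sum>j\<le>N. j * b' j) < m" .
      have "G b' = 0" using less.IH[OF lt refl b'0 b'N sb'] .
      then show ?thesis using sym[OF i(1), of b'] bb by simp
    qed
  qed
  show ?thesis using main[OF refl a0 aN sN] .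
qed

lemma tw_inj: "tw d s = tw d s' \<Longrightarrow> s = s'"
  by (auto simp: tw_def split: if_splits)

theorem abstract_main:
  fixes f :: "(nat \<Rightarrow> nat) \<Rightarrow> int"
  assumes d1: "1 \<le> d"
    and van: "\<forall>a. \<not> good d a \<longrightarrow> f a = 0"
    and sym: "\<forall>a i. 1 \<le> i \<longrightarrow> f (a \<circ> sw i) = f a"
    and nn0: "0 \<le> f (content2 d 0)"
    and ineq: "\<forall>r. 1 \<le> r \<longrightarrow> 2 * r \<le> d \<longrightarrow> f (content2 (d - r + 1) (r - 1)) \<le> f (content2 (d - r) r)"
  shows "schur2_nonneg d f"
proof -
  let ?P = "partitions_of d"
  obtain c where csupp: "\<forall>x. x \<notin> ?P \<longrightarrow> c x = 0"
    and ceq: "\<forall>m\<in>?P. (\<Sum>n\<in>?P. c n * schur n (pf m)) = f (pf m)"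
    using tri_exists[OF finite_partitions K_conds, of d "\<lambda>m. f (pf m)"] by blast
  define h where "h a = (\<Sum>n\<in>?P. c n * schur n a)" for a
  have hsym: "h (a \<circ> sw i) = h a" if "1 \<le> i" for a i
    unfolding h_def by (rule sum.cong[OF refl]) (use schur_sw that in \<open>auto simp: partitions_of_def\<close>)
  have hvan: "h a = 0" if "\<not> good d a" for a
  proof -
    have "schur n a = 0" if "n \<in> ?P" for n
      using schur_good[of n a] that \<open>\<not> good d a\<close> by (auto simp: partitions_of_def)
    then show ?thesis unfolding h_def by simp
  qed
  have fh: "f a = h a" for a
  proof -
    define G where "G a = f a - h a" for a
    have "G a = 0"
    proof (cases "good d a")
      case True
      show ?thesis
      proof (rule sort_zero[OF _ _ True])
        show "G (b \<circ> sw i) = G b" if "1 \<le> i" for b i using sym hsym that by (simp add: G_def)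
        show "G (pf mu) = 0" if "mu \<in> ?P" for mu using ceq that by (simp add: G_def h_def)
      qed
    next
      case False
      then show ?thesis using van hvan by (simp add: G_def)
    qed
    then show ?thesis by (simp add: G_def)
  qed
  have coeff: "schur_coeff d f = c"
    unfolding schur_coeff_def
  proof (rule the_equality)
    show "(\<forall>mu. c mu \<noteq> 0 \<longrightarrow> mu \<in> ?P) \<and> (\<forall>a. f a = (\<Sum>mu\<in>?P. c mu * schur mu a))"
      using csupp fh by (auto simp: h_def)
  next
    fix c' assume c': "(\<forall>mu. c' mu \<noteq> 0 \<longrightarrow> mu \<in> ?P) \<and> (\<forall>a. f a = (\<Sum>mu\<in>?P. c' mu * schur mu a))"
    show "c' = c"
    proof
      fix y
      define e where "e x = c' x - c x" for x
      have "e y = 0"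
      proof (rule tri_unique[OF finite_partitions K_conds])
        show "\<forall>x. x \<notin> ?P \<longrightarrow> e x = 0" using c' csupp by (auto simp: e_def)
        show "\<forall>m\<in>?P. (\<Sum>n\<in>?P. e n * schur n (pf m)) = 0"
        proof
          fix m assume m: "m \<in> ?P"
          have "(\<Sum>n\<in>?P. e n * schur n (pf m)) = (\<Sum>n\<in>?P. c' n * schur n (pf m)) - (\<Sum>n\<in>?P. c n * schur n (pf m))"
            by (simp add: e_def algebra_simps sum_subtractf)
          also have "\<dots> = 0" using c' ceq m by simp
          finally show "(\<Sum>n\<in>?P. e n * schur n (pf m)) = 0" .
        qed
      qed
      then show "c' y = c y" by (simp add: e_def)
    qed
  qed
  have ext: "f (content2 (d - r) r) = (\<Sum>s\<le>r. c (tw d s))" if r: "2 * r \<le> d" for r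
  proof -
    have "f (content2 (d - r) r) = (\<Sum>n\<in>?P. c n * (if \<exists>s\<le>r. n = tw d s then 1 else 0))"
      unfolding fh h_def by (rule sum.cong[OF refl]) (simp add: schur_two[OF r _ d1])
    also have "\<dots> = (\<Sum>n\<in>?P. if \<exists>s\<le>r. n = tw d s then c n else 0)"
      by (rule sum.cong) auto
    also have "\<dots> = (\<Sum>n\<in>{n \<in> ?P. \<exists>s\<le>r. n = tw d s}. c n)"
      by (rule sum.inter_filter[OF finite_partitions, symmetric])
    also have "{n \<in> ?P. \<exists>s\<le>r. n = tw d s} = tw d ` {..r}"
      using tw_part[OF _ d1] r by auto
    also have "(\<Sum>n\<in>tw d ` {..r}. c n) = (\<Sum>s\<le>r. c (tw d s))"
      by (subst sum.reindex) (auto simp: inj_on_def intro: tw_inj)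
    finally show ?thesis .
  qed
  show ?thesis
    unfolding schur2_nonneg_def coeff
  proof (intro allI impI, elim conjE)
    fix la :: "nat list" assume pa: "is_partition la" and l2: "length la \<le> 2"
    show "0 \<le> c la"
    proof (cases "la \<in> ?P")
      case False then show ?thesis using csupp by simp
    next
      case inP: True
      then have sm: "sum_list la = d" by (simp add: partitions_of_def)
      consider "la = []" | x where "la = [x]" | x y where "la = [x, y]"
        using l2 by (cases la; cases "tl la"; auto)
      then show ?thesis
      proof cases
        case 1 then show ?thesis using sm d1 by simp
      next
        case 2
        then have "la = tw d 0" using sm by (simp add: tw_def)
        then show ?thesis using ext[of 0] nn0 by simp
      next
        case 3
        have y0: "0 < y" "y \<le> x" using pa 3 by (auto simp: is_partition_def)
        have xy: "x + y = d" using sm 3 by simp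
        have tw: "la = tw d y" using 3 y0 xy by (auto simp: tw_def)
        have r1: "2 * y \<le> d" "2 * (y - 1) \<le> d" using y0 xy by auto
        have "f (content2 (d - y) y) = (\<Sum>s\<le>y. c (tw d s))" by (rule ext[OF r1(1)])
        also have "\<dots> = (\<Sum>s\<le>y - 1. c (tw d s)) + c (tw d y)"
          using y0 by (cases y) (auto simp: atMost_Suc)
        also have "(\<Sum>s\<le>y - 1. c (tw d s)) = f (content2 (d - (y - 1)) (y - 1))"
          by (rule ext[OF r1(2), symmetric])
        finally have "c la = f (content2 (d - y) y) - f (content2 (d - y + 1) (y - 1))"
          using tw y0 xy by (simp add: Suc_diff_le)
        then show ?thesis using ineq y0 r1(1) by fastforce
      qed
    qed
  qed
qed

definition XS :: "'v set \<Rightarrow> ('v \<Rightarrow> 'v \<Rightarrow> bool) \<Rightarrow> ('v \<Rightarrow> nat) \<Rightarrow> (nat \<Rightarrow> nat) \<Rightarrow> ('v \<Rightarrow> nat set) set" where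
  "XS V E \<alpha> a = {\<kappa> :: 'v \<Rightarrow> nat set.
      (\<forall>v. v \<notin> V \<longrightarrow> \<kappa> v = {}) \<and>
      (\<forall>v\<in>V. \<kappa> v \<subseteq> {1..} \<and> finite (\<kappa> v) \<and> card (\<kappa> v) = \<alpha> v) \<and>
      (\<forall>v\<in>V. \<forall>w\<in>V. E v w \<longrightarrow> \<kappa> v \<inter> \<kappa> w = {}) \<and>
      (\<forall>i. a i = card {v\<in>V. i \<in> \<kappa> v})}"

lemma Xcoef_XS: "Xcoef V E \<alpha> a = int (card (XS V E \<alpha> a))"
  by (simp add: Xcoef_def XS_def)

lemma XS_good:
  assumes "finite V" "\<kappa> \<in> XS V E \<alpha> a"
  shows "good (\<Sum>v\<in>V. \<alpha> v) a"
proof -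
  have k1: "\<forall>v\<in>V. \<kappa> v \<subseteq> {1..} \<and> finite (\<kappa> v) \<and> card (\<kappa> v) = \<alpha> v"
    and ka: "\<forall>i. a i = card {v\<in>V. i \<in> \<kappa> v}" using assms(2) by (auto simp: XS_def)
  define U where "U = (\<Union>v\<in>V. \<kappa> v)"
  have fU: "finite U" using assms(1) k1 by (auto simp: U_def)
  have a0: "a 0 = 0"
  proof -
    have e: "{v\<in>V. 0 \<in> \<kappa> v} = {}" using k1 by fastforce
    show ?thesis unfolding ka[rule_format, of 0] e by simp
  qed
  have sub: "{i. 0 < a i} \<subseteq> U"
  proof
    fix i assume "i \<in> {i. 0 < a i}"
    then have "card {v\<in>V. i \<in> \<kappa> v} \<noteq> 0" using ka by simp
    then have "{v\<in>V. i \<in> \<kappa> v} \<noteq> {}" by (metis card.empty)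
    then show "i \<in> U" by (auto simp: U_def)
  qed
  have "sum a {i. 0 < a i} = sum a U"
    by (rule sum.mono_neutral_left[OF fU sub]) auto
  also have "\<dots> = (\<Sum>i\<in>U. \<Sum>v\<in>V. if i \<in> \<kappa> v then 1 else 0)"
    by (rule sum.cong[OF refl]) (simp add: ka sum.If_cases assms(1) Collect_conj_eq Int_commute)
  also have "\<dots> = (\<Sum>v\<in>V. \<Sum>i\<in>U. if i \<in> \<kappa> v then 1 else 0)" by (rule sum.swap)
  also have "\<dots> = (\<Sum>v\<in>V. \<alpha> v)"
  proof (rule sum.cong[OF refl])
    fix v assume v: "v \<in> V"
    have "(\<Sum>i\<in>U. if i \<in> \<kappa> v then 1 else 0) = card (U \<inter> \<kappa> v)"
      by (simp add: sum.If_cases fU)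
    also have "U \<inter> \<kappa> v = \<kappa> v" using v by (auto simp: U_def)
    finally show "(\<Sum>i\<in>U. if i \<in> \<kappa> v then 1 else (0::nat)) = \<alpha> v" using k1 v by simp
  qed
  finally show ?thesis unfolding good_def using a0 finite_subset[OF sub fU] by simp
qed

lemma Xcoef_good:
  assumes "finite V" "Xcoef V E \<alpha> a \<noteq> 0"
  shows "good (\<Sum>v\<in>V. \<alpha> v) a"
proof -
  from assms(2) have "XS V E \<alpha> a \<noteq> {}" by (auto simp: Xcoef_XS)
  then obtain \<kappa> where "\<kappa> \<in> XS V E \<alpha> a" by blast
  then show ?thesis using XS_good assms(1) by blast
qed

lemma mem_sw_image: "j \<in> sw i ` S \<longleftrightarrow> sw i j \<in> S"
proof
  assume "j \<in> sw i ` S"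
  then obtain x where "x \<in> S" "j = sw i x" by blast
  then show "sw i j \<in> S" by (simp add: sw_inv)
next
  assume "sw i j \<in> S"
  then have "sw i (sw i j) \<in> sw i ` S" by blast
  then show "j \<in> sw i ` S" by (simp add: sw_inv)
qed

lemma inj_sw: "inj (sw i)"
  by (metis injI sw_inv)

lemma XS_sw_map:
  assumes "\<kappa> \<in> XS V E \<alpha> a" "1 \<le> i"
  shows "(\<lambda>v. sw i ` \<kappa> v) \<in> XS V E \<alpha> (a \<circ> sw i)"
proof -
  have k0: "\<forall>v. v \<notin> V \<longrightarrow> \<kappa> v = {}"
    and k1: "\<forall>v\<in>V. \<kappa> v \<subseteq> {1..} \<and> finite (\<kappa> v) \<and> card (\<kappa> v) = \<alpha> v"
    and k2: "\<forall>v\<in>V. \<forall>w\<in>V. E v w \<longrightarrow> \<kappa> v \<inter> \<kappa> w = {}"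
    and ka: "\<forall>j. a j = card {v\<in>V. j \<in> \<kappa> v}" using assms(1) by (auto simp: XS_def)
  have swpos: "sw i j \<in> {1..}" if "j \<in> {1..}" for j using that assms(2) by (auto simp: sw_def)
  have "\<forall>v\<in>V. sw i ` \<kappa> v \<subseteq> {1..} \<and> finite (sw i ` \<kappa> v) \<and> card (sw i ` \<kappa> v) = \<alpha> v"
    using k1 swpos by (auto simp: card_image inj_on_subset[OF inj_sw])
  moreover have "\<forall>v\<in>V. \<forall>w\<in>V. E v w \<longrightarrow> sw i ` \<kappa> v \<inter> sw i ` \<kappa> w = {}"
    using k2 by (simp add: image_Int[OF inj_sw, symmetric])
  moreover have "\<forall>j. (a \<circ> sw i) j = card {v\<in>V. j \<in> sw i ` \<kappa> v}"
    using ka by (simp add: mem_sw_image)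
  ultimately show ?thesis using k0 by (simp add: XS_def)
qed

lemma Xcoef_sw:
  assumes "1 \<le> i"
  shows "Xcoef V E \<alpha> (a \<circ> sw i) = Xcoef V E \<alpha> a"
proof -
  let ?f = "\<lambda>\<kappa> v. sw i ` \<kappa> v"
  have ff: "?f (?f \<kappa>) = \<kappa>" for \<kappa> :: "'a \<Rightarrow> nat set"
    by (simp add: image_image sw_inv)
  have aa: "a \<circ> sw i \<circ> sw i = a" by (auto simp: fun_eq_iff sw_inv)
  have "bij_betw ?f (XS V E \<alpha> a) (XS V E \<alpha> (a \<circ> sw i))"
  proof (rule bij_betw_byWitness[where f' = ?f])
    show "\<forall>\<kappa>\<in>XS V E \<alpha> a. ?f (?f \<kappa>) = \<kappa>" using ff by blast
    show "\<forall>\<kappa>\<in>XS V E \<alpha> (a \<circ> sw i). ?f (?f \<kappa>) = \<kappa>" using ff by blast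
    show "?f ` XS V E \<alpha> a \<subseteq> XS V E \<alpha> (a \<circ> sw i)" using XS_sw_map[OF _ assms] by blast
    show "?f ` XS V E \<alpha> (a \<circ> sw i) \<subseteq> XS V E \<alpha> a" using XS_sw_map[OF _ assms, of _ V E \<alpha> "a \<circ> sw i"] aa by auto
  qed
  then show ?thesis unfolding Xcoef_XS by (simp add: bij_betw_same_card)
qed

definition kap :: "'v set \<Rightarrow> ('v \<Rightarrow> nat) \<Rightarrow> 'v set \<Rightarrow> 'v \<Rightarrow> nat set" where
  "kap V \<alpha> S v = (if v \<in> V then (if \<alpha> v = 2 then {1, 2} else if \<alpha> v = 1 then (if v \<in> S then {1} else {2}) else {}) else {})"

definition okS :: "'v set \<Rightarrow> ('v \<Rightarrow> 'v \<Rightarrow> bool) \<Rightarrow> ('v \<Rightarrow> nat) \<Rightarrow> 'v set \<Rightarrow> bool" where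
  "okS V E \<alpha> S \<longleftrightarrow> (\<forall>v\<in>V. \<forall>w\<in>V. E v w \<longrightarrow> kap V \<alpha> S v \<inter> kap V \<alpha> S w = {})"

definition Wn :: "'v set \<Rightarrow> ('v \<Rightarrow> nat) \<Rightarrow> nat \<Rightarrow> 'v set" where
  "Wn V \<alpha> k = {v\<in>V. \<alpha> v = k}"

lemma XS_sub12:
  assumes "finite V" "\<kappa> \<in> XS V E \<alpha> (content2 p q)" "v \<in> V"
  shows "\<kappa> v \<subseteq> {1, 2}"
proof
  fix j assume j: "j \<in> \<kappa> v"
  have k1: "\<kappa> v \<subseteq> {1..}" and ka: "content2 p q j = card {w\<in>V. j \<in> \<kappa> w}"
    using assms(2,3) by (auto simp: XS_def)
  have "{w\<in>V. j \<in> \<kappa> w} \<noteq> {}" using j assms(3) by blast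
  moreover have "finite {w\<in>V. j \<in> \<kappa> w}" using assms(1) by simp
  ultimately have "content2 p q j > 0" using ka card_gt_0_iff by metis
  then show "j \<in> {1, 2}" by (auto simp: content2_def split: if_splits)
qed

lemma XS_big_empty:
  assumes "finite V" "v \<in> V" "3 \<le> \<alpha> v"
  shows "XS V E \<alpha> (content2 p q) = {}"
proof (rule ccontr)
  assume "XS V E \<alpha> (content2 p q) \<noteq> {}"
  then obtain \<kappa> where k: "\<kappa> \<in> XS V E \<alpha> (content2 p q)" by blast
  have "\<kappa> v \<subseteq> {1, 2}" by (rule XS_sub12[OF assms(1) k assms(2)])
  then have "card (\<kappa> v) \<le> card {1::nat, 2}" by (intro card_mono) auto
  then have "card (\<kappa> v) \<le> 2" by simp
  moreover have "card (\<kappa> v) = \<alpha> v" using k assms(2) by (auto simp: XS_def)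
  ultimately show False using assms(3) by simp
qed

lemma cnt1: "S \<subseteq> Wn V \<alpha> 1 \<Longrightarrow> {v\<in>V. 1 \<in> kap V \<alpha> S v} = Wn V \<alpha> 2 \<union> S"
  by (auto simp: kap_def Wn_def)

lemma cnt2: "S \<subseteq> Wn V \<alpha> 1 \<Longrightarrow> {v\<in>V. 2 \<in> kap V \<alpha> S v} = Wn V \<alpha> 2 \<union> (Wn V \<alpha> 1 - S)"
  by (auto simp: kap_def Wn_def)

lemma cnt_other: "j \<noteq> 1 \<Longrightarrow> j \<noteq> 2 \<Longrightarrow> {v\<in>V. j \<in> kap V \<alpha> S v} = {}"
  by (auto simp: kap_def)

lemma XS_two:
  assumes fin: "finite V" and le2: "\<forall>v\<in>V. \<alpha> v \<le> 2"
  shows "XS V E \<alpha> (content2 p q) = kap V \<alpha> ` {S. S \<subseteq> Wn V \<alpha> 1 \<and> card (Wn V \<alpha> 2) + card S = p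
      \<and> card (Wn V \<alpha> 2) + card (Wn V \<alpha> 1 - S) = q \<and> okS V E \<alpha> S}"
    (is "?L = kap V \<alpha> ` ?R")
proof
  have finW: "finite (Wn V \<alpha> k)" for k using fin by (simp add: Wn_def)
  have d12: "Wn V \<alpha> 2 \<inter> S = {}" if "S \<subseteq> Wn V \<alpha> 1" for S using that by (auto simp: Wn_def)
  show "?L \<subseteq> kap V \<alpha> ` ?R"
  proof
    fix \<kappa> assume k: "\<kappa> \<in> ?L"
    have k0: "\<forall>v. v \<notin> V \<longrightarrow> \<kappa> v = {}"
      and k1: "\<forall>v\<in>V. \<kappa> v \<subseteq> {1..} \<and> finite (\<kappa> v) \<and> card (\<kappa> v) = \<alpha> v"
      and k2: "\<forall>v\<in>V. \<forall>w\<in>V. E v w \<longrightarrow> \<kappa> v \<inter> \<kappa> w = {}"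
      and ka: "\<forall>j. content2 p q j = card {v\<in>V. j \<in> \<kappa> v}" using k by (auto simp: XS_def)
    define S where "S = {v\<in>V. \<alpha> v = 1 \<and> \<kappa> v = {1}}"
    have SW: "S \<subseteq> Wn V \<alpha> 1" by (auto simp: S_def Wn_def)
    have kk: "\<kappa> = kap V \<alpha> S"
    proof
      fix v show "\<kappa> v = kap V \<alpha> S v"
      proof (cases "v \<in> V")
        case False then show ?thesis using k0 by (simp add: kap_def)
      next
        case True
        have sub: "\<kappa> v \<subseteq> {1, 2}" by (rule XS_sub12[OF fin k True])
        have c: "card (\<kappa> v) = \<alpha> v" using k1 True by simp
        consider "\<alpha> v = 0" | "\<alpha> v = 1" | "\<alpha> v = 2" using le2 True by force
        then show ?thesis
        proof cases
          case 1
          then have "\<kappa> v = {}" using c sub by (metis card_0_eq finite.emptyI finite_insert finite_subset)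
          then show ?thesis using 1 True by (simp add: kap_def)
        next
          case 2
          then obtain x where x: "\<kappa> v = {x}" using c card_1_singletonE by metis
          then have "x = 1 \<or> x = 2" using sub by auto
          then show ?thesis using 2 True x by (auto simp: kap_def S_def)
        next
          case 3
          have "\<kappa> v = {1, 2}" using c sub 3 by (intro card_subset_eq) auto
          then show ?thesis using 3 True by (simp add: kap_def)
        qed
      qed
    qed
    have "p = card (Wn V \<alpha> 2 \<union> S)" using ka[rule_format, of 1] cnt1[OF SW] kk by (simp add: content2_def)
    also have "\<dots> = card (Wn V \<alpha> 2) + card S"
      by (rule card_Un_disjoint) (use finW finite_subset[OF SW] d12[OF SW] in auto)
    finally have cp: "card (Wn V \<alpha> 2) + card S = p" by simp
    have "q = card (Wn V \<alpha> 2 \<union> (Wn V \<alpha> 1 - S))" using ka[rule_format, of 2] cnt2[OF SW] kk by (simp add: content2_def)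
    also have "\<dots> = card (Wn V \<alpha> 2) + card (Wn V \<alpha> 1 - S)"
      by (rule card_Un_disjoint) (use finW d12 in auto)
    finally have cq: "card (Wn V \<alpha> 2) + card (Wn V \<alpha> 1 - S) = q" by simp
    have "okS V E \<alpha> S" using k2 kk by (simp add: okS_def)
    then show "\<kappa> \<in> kap V \<alpha> ` ?R" using SW cp cq kk by blast
  qed
  show "kap V \<alpha> ` ?R \<subseteq> ?L"
  proof
    fix \<kappa> assume "\<kappa> \<in> kap V \<alpha> ` ?R"
    then obtain S where S: "S \<subseteq> Wn V \<alpha> 1" "card (Wn V \<alpha> 2) + card S = p"
      "card (Wn V \<alpha> 2) + card (Wn V \<alpha> 1 - S) = q" "okS V E \<alpha> S" and kk: "\<kappa> = kap V \<alpha> S" by blast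
    have a: "\<forall>v. v \<notin> V \<longrightarrow> \<kappa> v = {}" using kk by (simp add: kap_def)
    have b: "\<forall>v\<in>V. \<kappa> v \<subseteq> {1..} \<and> finite (\<kappa> v) \<and> card (\<kappa> v) = \<alpha> v"
    proof
      fix v assume v: "v \<in> V"
      consider "\<alpha> v = 0" | "\<alpha> v = 1" | "\<alpha> v = 2" using le2 v by force
      then show "\<kappa> v \<subseteq> {1..} \<and> finite (\<kappa> v) \<and> card (\<kappa> v) = \<alpha> v"
        by cases (auto simp: kk kap_def v)
    qed
    have c: "\<forall>v\<in>V. \<forall>w\<in>V. E v w \<longrightarrow> \<kappa> v \<inter> \<kappa> w = {}" using S(4) kk by (simp add: okS_def)
    have dd: "content2 p q j = card {v\<in>V. j \<in> \<kappa> v}" for j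
    proof -
      consider "j = 1" | "j = 2" | "j \<noteq> 1" "j \<noteq> 2" by blast
      then show ?thesis
      proof cases
        case 1
        have "card (Wn V \<alpha> 2 \<union> S) = card (Wn V \<alpha> 2) + card S"
          by (rule card_Un_disjoint) (use finW finite_subset[OF S(1)] d12[OF S(1)] in auto)
        then show ?thesis using 1 cnt1[OF S(1)] S(2) kk by (simp add: content2_def)
      next
        case 2
        have "card (Wn V \<alpha> 2 \<union> (Wn V \<alpha> 1 - S)) = card (Wn V \<alpha> 2) + card (Wn V \<alpha> 1 - S)"
          by (rule card_Un_disjoint) (use finW d12 in auto)
        then show ?thesis using 2 cnt2[OF S(1)] S(3) kk by (simp add: content2_def)
      next
        case 3
        have e: "{v\<in>V. j \<in> \<kappa> v} = {}" using cnt_other[OF 3, of V \<alpha> S] kk by simp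
        show ?thesis unfolding e using 3 by (simp add: content2_def)
      qed
    qed
    show "\<kappa> \<in> ?L" unfolding XS_def using a b c dd by blast
  qed
qed

lemma kap_inj: "inj_on (kap V \<alpha>) (Pow (Wn V \<alpha> 1))"
proof (rule inj_onI)
  fix S S' assume S: "S \<in> Pow (Wn V \<alpha> 1)" "S' \<in> Pow (Wn V \<alpha> 1)" and e: "kap V \<alpha> S = kap V \<alpha> S'"
  show "S = S'"
  proof (rule set_eqI)
    fix v
    show "v \<in> S \<longleftrightarrow> v \<in> S'"
    proof (cases "v \<in> Wn V \<alpha> 1")
      case True
      then have "kap V \<alpha> S v = kap V \<alpha> S' v" using e by simp
      then show ?thesis using True by (auto simp: kap_def Wn_def split: if_splits)
    next
      case False then show ?thesis using S by auto
    qed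
  qed
qed

lemma Xcoef_two:
  assumes fin: "finite V" and le2: "\<forall>v\<in>V. \<alpha> v \<le> 2"
  shows "Xcoef V E \<alpha> (content2 p q) = int (card {S. S \<subseteq> Wn V \<alpha> 1 \<and> card (Wn V \<alpha> 2) + card S = p
      \<and> card (Wn V \<alpha> 2) + card (Wn V \<alpha> 1 - S) = q \<and> okS V E \<alpha> S})"
  unfolding Xcoef_XS XS_two[OF assms]
  by (subst card_image) (rule inj_on_subset[OF kap_inj], auto)

lemma Xcoef_big:
  assumes "finite V" "v \<in> V" "3 \<le> \<alpha> v"
  shows "Xcoef V E \<alpha> (content2 p q) = 0"
  using XS_big_empty[where V=V and v=v and \<alpha>=\<alpha> and E=E and p=p and q=q] assms unfolding Xcoef_XS by simp

lemma kap_disj: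
  assumes "v \<in> V" "w \<in> V" "\<alpha> v \<le> 2" "\<alpha> w \<le> 2"
  shows "kap V \<alpha> S v \<inter> kap V \<alpha> S w = {} \<longleftrightarrow>
    (\<alpha> v = 0 \<or> \<alpha> w = 0 \<or> (\<alpha> v = 1 \<and> \<alpha> w = 1 \<and> (v \<in> S \<longleftrightarrow> w \<notin> S)))"
proof -
  consider "\<alpha> v = 0" | "\<alpha> v = 1" | "\<alpha> v = 2" using assms(3) by force
  moreover consider "\<alpha> w = 0" | "\<alpha> w = 1" | "\<alpha> w = 2" using assms(4) by force
  ultimately show ?thesis using assms(1,2) by cases (cases, auto simp: kap_def)+
qed

definition bi :: "nat \<Rightarrow> int \<Rightarrow> int" where
  "bi e t = (if t < 0 then 0 else int (e choose nat t))"

definition su :: "int \<Rightarrow> (int \<Rightarrow> int) \<Rightarrow> bool" where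
  "su M b \<longleftrightarrow> (\<forall>t. b t = b (M - t)) \<and> (\<forall>t. 2 * (t + 1) \<le> M \<longrightarrow> b t \<le> b (t + 1))"

lemma su_dec:
  assumes "su M b" "M \<le> 2 * t"
  shows "b (t + 1) \<le> b t"
proof -
  have s: "\<forall>t. b t = b (M - t)" and u: "\<forall>t. 2 * (t + 1) \<le> M \<longrightarrow> b t \<le> b (t + 1)"
    using assms(1) by (auto simp: su_def)
  have "2 * (M - t - 1 + 1) \<le> M" using assms(2) by simp
  then have "b (M - t - 1) \<le> b (M - t - 1 + 1)" using u by blast
  then show ?thesis using s[rule_format, of "t + 1"] s[rule_format, of t] by (simp add: algebra_simps)
qed

lemma su_pascal:
  assumes "su M b"
  shows "su (M + 1) (\<lambda>t. b t + b (t - 1))"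
proof -
  have s: "\<forall>t. b t = b (M - t)" and u: "\<forall>t. 2 * (t + 1) \<le> M \<longrightarrow> b t \<le> b (t + 1)"
    using assms(1) by (auto simp: su_def)
  have sym: "b t + b (t - 1) = b (M + 1 - t) + b (M + 1 - t - 1)" for t
    using s[rule_format, of t] s[rule_format, of "t - 1"] by (simp add: algebra_simps)
  have un: "b t + b (t - 1) \<le> b (t + 1) + b (t + 1 - 1)" if "2 * (t + 1) \<le> M + 1" for t
  proof -
    have "b (t - 1) \<le> b (t + 1)"
    proof (cases "2 * (t + 1) \<le> M")
      case True
      then have "b (t - 1) \<le> b t" using u[rule_format, of "t - 1"] by simp
      also have "\<dots> \<le> b (t + 1)" using u True by simp
      finally show ?thesis .
    next
      case False
      then have M: "M = 2 * t + 1" using that by simp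
      have "b (t - 1) \<le> b t" using u[rule_format, of "t - 1"] M by simp
      also have "b t = b (t + 1)" using s[rule_format, of t] M by simp
      finally show ?thesis .
    qed
    then show ?thesis by simp
  qed
  show ?thesis unfolding su_def using sym un by blast
qed

lemma su_add: "su M b1 \<Longrightarrow> su M b2 \<Longrightarrow> su M (\<lambda>t. b1 t + b2 t)"
  unfolding su_def by (auto intro: add_mono)

lemma su_scale: "su M b \<Longrightarrow> 0 \<le> c \<Longrightarrow> su M (\<lambda>t. c * b t)"
  unfolding su_def by (auto intro: mult_left_mono)

lemma bi_pascal: "bi (Suc e) t = bi e t + bi e (t - 1)"
proof (cases "t < 0")
  case True then show ?thesis by (simp add: bi_def)
next
  case False
  show ?thesis
  proof (cases "t = 0")
    case True then show ?thesis by (simp add: bi_def)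
  next
    case False
    have k: "nat t = Suc (nat (t - 1))" using \<open>\<not> t < 0\<close> False by simp
    have "t - 1 \<ge> 0" using \<open>\<not> t < 0\<close> False by simp
    then show ?thesis using \<open>\<not> t < 0\<close> k by (simp add: bi_def)
  qed
qed

lemma bi_zero: "bi 0 t = (if t = 0 then 1 else 0)"
  by (auto simp: bi_def)

lemma su_bi: "su (int e) (bi e)"
proof (induction e)
  case 0
  show ?case unfolding su_def bi_zero by auto
next
  case (Suc e)
  have "su (int e + 1) (\<lambda>t. bi e t + bi e (t - 1))" by (rule su_pascal[OF Suc])
  moreover have "(\<lambda>t. bi e t + bi e (t - 1)) = bi (Suc e)" by (auto simp: bi_pascal)
  ultimately show ?case by (simp add: add.commute)
qed

lemma bi_nonneg: "0 \<le> bi e t" by (simp add: bi_def)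

lemma su_base:
  fixes N :: nat and c :: int
  assumes "1 \<le> N" "1 \<le> c"
  shows "su (int N) (\<lambda>t. c * bi N t + bi 0 t + bi 0 (t - int N))"
proof -
  have s: "\<forall>t. bi N t = bi N (int N - t)" and u: "\<forall>t. 2 * (t + 1) \<le> int N \<longrightarrow> bi N t \<le> bi N (t + 1)"
    using su_bi[of N] by (auto simp: su_def)
  have sym: "c * bi N t + bi 0 t + bi 0 (t - int N) = c * bi N (int N - t) + bi 0 (int N - t) + bi 0 (int N - t - int N)" for t
    using s[rule_format, of t] by (auto simp: bi_zero)
  have un: "c * bi N t + bi 0 t + bi 0 (t - int N) \<le> c * bi N (t + 1) + bi 0 (t + 1) + bi 0 (t + 1 - int N)"
    if "2 * (t + 1) \<le> int N" for t
  proof (cases "t < 0")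
    case True
    then have "bi N t = 0" "bi 0 t = 0" "bi 0 (t - int N) = 0" by (auto simp: bi_def)
    then show ?thesis using bi_nonneg[of N "t + 1"] bi_nonneg[of 0] assms(2) by simp
  next
    case False
    show ?thesis
    proof (cases "t = 0")
      case True
      then have N2: "2 \<le> N" using that by simp
      have "bi N 0 = 1" by (simp add: bi_def)
      moreover have "bi N 1 = int N" by (simp add: bi_def)
      moreover have "bi 0 (0 - int N) = 0" "bi 0 1 = 0" "bi 0 (1 - int N) = 0" using N2 by (auto simp: bi_def)
      ultimately have "c * bi N t + bi 0 t + bi 0 (t - int N) = c + 1"
        "c * bi N (t + 1) + bi 0 (t + 1) + bi 0 (t + 1 - int N) = c * int N" using True by (auto simp: bi_zero)
      moreover have "c + 1 \<le> c * int N"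
      proof -
        have "c * 2 \<le> c * int N" using N2 assms(2) by (intro mult_left_mono) auto
        then show ?thesis using assms(2) by linarith
      qed
      ultimately show ?thesis by simp
    next
      case False
      then have "bi 0 t = 0" "bi 0 (t - int N) = 0" "bi 0 (t + 1) = 0" "bi 0 (t + 1 - int N) = 0"
        using \<open>\<not> t < 0\<close> that by (auto simp: bi_zero)
      moreover have "c * bi N t \<le> c * bi N (t + 1)" using u that assms(2) by (intro mult_left_mono) auto
      ultimately show ?thesis by simp
    qed
  qed
  show ?thesis unfolding su_def using sym un by blast
qed

lemma su_full:
  fixes N e :: nat and c :: int
  assumes "1 \<le> N" "1 \<le> c"
  shows "su (int (N + e)) (\<lambda>t. c * bi (N + e) t + bi e t + bi e (t - int N))"
proof (induction e)
  case 0
  then show ?case using su_base[OF assms] by simp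
next
  case (Suc e)
  have "su (int (N + e) + 1) (\<lambda>t. (c * bi (N + e) t + bi e t + bi e (t - int N)) +
      (c * bi (N + e) (t - 1) + bi e (t - 1) + bi e (t - 1 - int N)))"
    by (rule su_pascal[OF Suc])
  moreover have "(\<lambda>t. (c * bi (N + e) t + bi e t + bi e (t - int N)) +
      (c * bi (N + e) (t - 1) + bi e (t - 1) + bi e (t - 1 - int N)))
    = (\<lambda>t. c * bi (N + Suc e) t + bi (Suc e) t + bi (Suc e) (t - int N))"
    by (auto simp: bi_pascal algebra_simps)
  ultimately show ?case by (simp add: add.commute add.left_commute)
qed

lemma card_subsets_int:
  assumes "finite I"
  shows "int (card {J. J \<subseteq> I \<and> int (card J) = x}) = bi (card I) x"
proof (cases "x < 0")
  case True
  then have "{J. J \<subseteq> I \<and> int (card J) = x} = {}" by auto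
  then show ?thesis using True by (simp add: bi_def)
next
  case False
  then have "{J. J \<subseteq> I \<and> int (card J) = x} = {J. J \<subseteq> I \<and> card J = nat x}" by auto
  then show ?thesis using False n_subsets[OF assms, of "nat x"] by (simp add: bi_def)
qed

lemma GC:
  assumes fW: "finite W" and DW: "D \<subseteq> W" and Ch: "Ch \<subseteq> Pow D"
    and ok: "\<And>S. S \<subseteq> W \<Longrightarrow> ok S \<longleftrightarrow> S \<inter> D \<in> Ch"
  shows "int (card {S. S \<subseteq> W \<and> ok S \<and> int (card S) = t}) = (\<Sum>Y\<in>Ch. bi (card (W - D)) (t - int (card Y)))"
proof -
  let ?I = "W - D"
  let ?A = "\<lambda>Y. (\<lambda>J. Y \<union> J) ` {J. J \<subseteq> ?I \<and> int (card J) = t - int (card Y)}"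
  have fD: "finite D" using fW DW finite_subset by blast
  have fI: "finite ?I" using fW by simp
  have fCh: "finite Ch" using Ch fD by (meson finite_Pow_iff finite_subset)
  have eq: "{S. S \<subseteq> W \<and> ok S \<and> int (card S) = t} = (\<Union>Y\<in>Ch. ?A Y)"
  proof
    show "{S. S \<subseteq> W \<and> ok S \<and> int (card S) = t} \<subseteq> (\<Union>Y\<in>Ch. ?A Y)"
    proof
      fix S assume S: "S \<in> {S. S \<subseteq> W \<and> ok S \<and> int (card S) = t}"
      then have SW: "S \<subseteq> W" and okS: "ok S" and cS: "int (card S) = t" by auto
      have Y: "S \<inter> D \<in> Ch" using ok[OF SW] okS by simp
      have un: "S = (S \<inter> D) \<union> (S - D)" by auto
      have fS: "finite S" using SW fW finite_subset by blast
      have "card S = card (S \<inter> D) + card (S - D)"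
        by (subst un, rule card_Un_disjoint) (use fS in auto)
      then have "int (card (S - D)) = t - int (card (S \<inter> D))" using cS by simp
      moreover have "S - D \<subseteq> ?I" using SW by auto
      ultimately have "S \<in> ?A (S \<inter> D)" using un by blast
      then show "S \<in> (\<Union>Y\<in>Ch. ?A Y)" using Y by blast
    qed
    show "(\<Union>Y\<in>Ch. ?A Y) \<subseteq> {S. S \<subseteq> W \<and> ok S \<and> int (card S) = t}"
    proof
      fix S assume "S \<in> (\<Union>Y\<in>Ch. ?A Y)"
      then obtain Y J where Y: "Y \<in> Ch" and J: "J \<subseteq> ?I" "int (card J) = t - int (card Y)" and S: "S = Y \<union> J"
        by blast
      have YD: "Y \<subseteq> D" using Y Ch by auto
      have SW: "S \<subseteq> W" using S YD J DW by auto
      have "S \<inter> D = Y" using S YD J by auto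
      then have "ok S" using ok[OF SW] Y by simp
      moreover have "card S = card Y + card J"
        unfolding S by (rule card_Un_disjoint) (use YD J fD finite_subset[OF J(1) fI] finite_subset[OF YD fD] in auto)
      ultimately show "S \<in> {S. S \<subseteq> W \<and> ok S \<and> int (card S) = t}" using SW J by simp
    qed
  qed
  have inj: "inj_on (\<lambda>J. Y \<union> J) {J. J \<subseteq> ?I \<and> int (card J) = t - int (card Y)}" if "Y \<in> Ch" for Y
  proof (rule inj_onI)
    fix J J' assume "J \<in> {J. J \<subseteq> ?I \<and> int (card J) = t - int (card Y)}" "J' \<in> {J. J \<subseteq> ?I \<and> int (card J) = t - int (card Y)}"
      and e: "Y \<union> J = Y \<union> J'"
    moreover have "Y \<subseteq> D" using that Ch by auto
    ultimately show "J = J'" by blast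
  qed
  have "card (\<Union>Y\<in>Ch. ?A Y) = (\<Sum>Y\<in>Ch. card (?A Y))"
  proof (rule card_UN_disjoint[OF fCh])
    show "\<forall>Y\<in>Ch. finite (?A Y)" using fI by auto
    show "\<forall>Y\<in>Ch. \<forall>Y'\<in>Ch. Y \<noteq> Y' \<longrightarrow> ?A Y \<inter> ?A Y' = {}"
    proof (intro ballI impI)
      fix Y Y' assume "Y \<in> Ch" "Y' \<in> Ch" "Y \<noteq> Y'"
      then have "Y \<subseteq> D" "Y' \<subseteq> D" using Ch by auto
      then show "?A Y \<inter> ?A Y' = {}" using \<open>Y \<noteq> Y'\<close> by blast
    qed
  qed
  also have "\<dots> = (\<Sum>Y\<in>Ch. card {J. J \<subseteq> ?I \<and> int (card J) = t - int (card Y)})"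
    by (rule sum.cong[OF refl]) (simp add: card_image inj)
  finally have "int (card {S. S \<subseteq> W \<and> ok S \<and> int (card S) = t}) =
      (\<Sum>Y\<in>Ch. int (card {J. J \<subseteq> ?I \<and> int (card J) = t - int (card Y)}))"
    unfolding eq by simp
  also have "\<dots> = (\<Sum>Y\<in>Ch. bi (card ?I) (t - int (card Y)))"
    by (rule sum.cong[OF refl]) (rule card_subsets_int[OF fI])
  finally show ?thesis .
qed

lemma sum_alpha:
  assumes "finite V" "\<forall>v\<in>V. \<alpha> v \<le> 2"
  shows "(\<Sum>v\<in>V. \<alpha> v) = 2 * card (Wn V \<alpha> 2) + card (Wn V \<alpha> 1)"
proof -
  have "(\<Sum>v\<in>V. \<alpha> v) = (\<Sum>v\<in>V. 2 * (if \<alpha> v = 2 then 1 else 0) + (if \<alpha> v = 1 then 1 else 0))"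
  proof (rule sum.cong[OF refl])
    fix v assume "v \<in> V"
    then have "\<alpha> v \<le> 2" using assms(2) by simp
    then show "\<alpha> v = 2 * (if \<alpha> v = 2 then 1 else 0) + (if \<alpha> v = 1 then 1 else 0)" by auto
  qed
  also have "\<dots> = 2 * (\<Sum>v\<in>V. if \<alpha> v = 2 then 1 else 0) + (\<Sum>v\<in>V. if \<alpha> v = 1 then 1 else 0)"
    by (simp add: sum.distrib sum_distrib_left)
  also have "\<dots> = 2 * card (Wn V \<alpha> 2) + card (Wn V \<alpha> 1)"
    using assms(1) by (simp add: sum.If_cases Wn_def Collect_conj_eq Int_commute)
  finally show ?thesis .
qed

lemma Xcoef_count:
  assumes fin: "finite V" and le2: "\<forall>v\<in>V. \<alpha> v \<le> 2" and pq: "p + q = (\<Sum>v\<in>V. \<alpha> v)"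
  shows "Xcoef V E \<alpha> (content2 p q) = int (card {S. S \<subseteq> Wn V \<alpha> 1 \<and> okS V E \<alpha> S \<and>
      int (card S) = int p - int (card (Wn V \<alpha> 2))})"
proof -
  have fW: "finite (Wn V \<alpha> 1)" using fin by (simp add: Wn_def)
  have sa: "p + q = 2 * card (Wn V \<alpha> 2) + card (Wn V \<alpha> 1)" using pq sum_alpha[OF fin le2] by simp
  have "{S. S \<subseteq> Wn V \<alpha> 1 \<and> card (Wn V \<alpha> 2) + card S = p \<and> card (Wn V \<alpha> 2) + card (Wn V \<alpha> 1 - S) = q \<and> okS V E \<alpha> S}
      = {S. S \<subseteq> Wn V \<alpha> 1 \<and> okS V E \<alpha> S \<and> int (card S) = int p - int (card (Wn V \<alpha> 2))}"
  proof (rule Collect_cong)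
    fix S
    show "(S \<subseteq> Wn V \<alpha> 1 \<and> card (Wn V \<alpha> 2) + card S = p \<and> card (Wn V \<alpha> 2) + card (Wn V \<alpha> 1 - S) = q \<and> okS V E \<alpha> S) =
          (S \<subseteq> Wn V \<alpha> 1 \<and> okS V E \<alpha> S \<and> int (card S) = int p - int (card (Wn V \<alpha> 2)))"
    proof (cases "S \<subseteq> Wn V \<alpha> 1")
      case True
      have "card (Wn V \<alpha> 1 - S) = card (Wn V \<alpha> 1) - card S" using True fW by (simp add: card_Diff_subset finite_subset)
      moreover have "card S \<le> card (Wn V \<alpha> 1)" using True fW by (simp add: card_mono)
      ultimately show ?thesis using True sa by auto
    qed auto
  qed
  then show ?thesis using Xcoef_two[OF fin le2] by simp
qed

lemma img_simps[simp]:
  "Mid i \<in> Mid ` A \<longleftrightarrow> i \<in> A" "End i \<in> End ` A \<longleftrightarrow> i \<in> A"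
  "Mid i \<notin> End ` A" "End i \<notin> Mid ` A" "Torso \<notin> Mid ` A" "Torso \<notin> End ` A"
  "Ucap \<notin> Mid ` A" "Ucap \<notin> End ` A"
  by auto

lemma V_mem:
  "Torso \<in> spider1_verts n" "Ucap \<in> spider1_verts n"
  "Mid i \<in> spider1_verts n \<longleftrightarrow> i \<in> {1..n}" "End i \<in> spider1_verts n \<longleftrightarrow> i \<in> {1..n}"
  by (auto simp: spider1_verts_def spider_verts_def)

lemma V_eq: "spider1_verts n = {Torso, Ucap} \<union> Mid ` {1..n} \<union> End ` {1..n}"
  by (auto simp: spider1_verts_def spider_verts_def)

lemma finite_V: "finite (spider1_verts n)"
  by (simp add: V_eq)

lemma adj_iff: "spider1_adj n v w \<longleftrightarrow>
  (\<exists>i\<in>{1..n}. (v = Torso \<and> w = Mid i) \<or> (v = Mid i \<and> w = Torso) \<or> (v = Mid i \<and> w = End i) \<or> (v = End i \<and> w = Mid i))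
  \<or> (v = Torso \<and> w = Ucap) \<or> (v = Ucap \<and> w = Torso)"
  unfolding spider1_adj_def by (auto simp: doubleton_eq_iff)

definition CC :: "(svert \<Rightarrow> nat) \<Rightarrow> svert set \<Rightarrow> svert \<Rightarrow> svert \<Rightarrow> bool" where
  "CC g S v w \<longleftrightarrow> (g v = 0 \<or> g w = 0 \<or> (g v = 1 \<and> g w = 1 \<and> (v \<in> S \<longleftrightarrow> w \<notin> S)))"

lemma CC_sym: "CC g S v w = CC g S w v"
  unfolding CC_def by auto

lemma okS_spider:
  assumes le2: "\<forall>v\<in>spider1_verts n. g v \<le> 2"
  shows "okS (spider1_verts n) (spider1_adj n) g S \<longleftrightarrow>
    (\<forall>i\<in>{1..n}. CC g S Torso (Mid i) \<and> CC g S (Mid i) (End i)) \<and> CC g S Torso Ucap"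
proof -
  let ?V = "spider1_verts n"
  have "okS ?V (spider1_adj n) g S \<longleftrightarrow> (\<forall>v\<in>?V. \<forall>w\<in>?V. spider1_adj n v w \<longrightarrow> CC g S v w)"
    unfolding okS_def CC_def using kap_disj[of _ ?V _ g] le2 by (metis (no_types, lifting))
  also have "\<dots> \<longleftrightarrow> (\<forall>i\<in>{1..n}. CC g S Torso (Mid i) \<and> CC g S (Mid i) (End i)) \<and> CC g S Torso Ucap"
  proof
    assume a: "\<forall>v\<in>?V. \<forall>w\<in>?V. spider1_adj n v w \<longrightarrow> CC g S v w"
    have "CC g S Torso Ucap" using a[rule_format, OF V_mem(1) V_mem(2)] by (simp add: adj_iff)
    moreover have "CC g S Torso (Mid i) \<and> CC g S (Mid i) (End i)" if i: "i \<in> {1..n}" for i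
    proof
      have "Mid i \<in> spider1_verts n" "End i \<in> spider1_verts n" using i V_mem by auto
      then show "CC g S Torso (Mid i)" "CC g S (Mid i) (End i)"
        using a[rule_format, OF V_mem(1), of "Mid i"] a[rule_format, of "Mid i" "End i"] i by (auto simp: adj_iff)
    qed
    ultimately show "(\<forall>i\<in>{1..n}. CC g S Torso (Mid i) \<and> CC g S (Mid i) (End i)) \<and> CC g S Torso Ucap"
      by blast
  next
    assume a: "(\<forall>i\<in>{1..n}. CC g S Torso (Mid i) \<and> CC g S (Mid i) (End i)) \<and> CC g S Torso Ucap"
    show "\<forall>v\<in>?V. \<forall>w\<in>?V. spider1_adj n v w \<longrightarrow> CC g S v w"
    proof (intro ballI impI)
      fix v w assume "v \<in> ?V" "w \<in> ?V" "spider1_adj n v w"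
      then consider i where "i \<in> {1..n}" "v = Torso" "w = Mid i" | i where "i \<in> {1..n}" "v = Mid i" "w = Torso"
        | i where "i \<in> {1..n}" "v = Mid i" "w = End i" | i where "i \<in> {1..n}" "v = End i" "w = Mid i"
        | "v = Torso" "w = Ucap" | "v = Ucap" "w = Torso" unfolding adj_iff by blast
      then show "CC g S v w" by cases (use a CC_sym in auto)
    qed
  qed
  finally show ?thesis .
qed

definition Pl :: "nat \<Rightarrow> (svert \<Rightarrow> nat) \<Rightarrow> nat set" where
  "Pl n \<alpha> = {i\<in>{1..n}. \<alpha> (Mid i) = 1 \<and> \<alpha> (End i) = 1}"
definition E1 :: "nat \<Rightarrow> (svert \<Rightarrow> nat) \<Rightarrow> nat set" where
  "E1 n \<alpha> = {i\<in>{1..n}. \<alpha> (Mid i) = 0 \<and> \<alpha> (End i) = 1}"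
definition U1 :: "(svert \<Rightarrow> nat) \<Rightarrow> svert set" where
  "U1 \<alpha> = (if \<alpha> Ucap = 1 then {Ucap} else {})"
definition Da :: "nat \<Rightarrow> (svert \<Rightarrow> nat) \<Rightarrow> svert set" where
  "Da n \<alpha> = insert Torso (U1 \<alpha> \<union> Mid ` (special_legs n \<alpha> \<union> Pl n \<alpha>) \<union> End ` Pl n \<alpha>)"
definition Xa :: "nat \<Rightarrow> (svert \<Rightarrow> nat) \<Rightarrow> svert set" where
  "Xa n \<alpha> = insert Torso (End ` Pl n \<alpha>)"

definition Db :: "nat \<Rightarrow> (svert \<Rightarrow> nat) \<Rightarrow> svert set" where "Db n \<alpha> = Mid ` Pl n \<alpha> \<union> End ` Pl n \<alpha>"
definition Chb :: "nat \<Rightarrow> (svert \<Rightarrow> nat) \<Rightarrow> svert set set" where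
  "Chb n \<alpha> = {Y. Y \<subseteq> Db n \<alpha> \<and> (\<forall>i\<in>Pl n \<alpha>. Mid i \<in> Y \<longleftrightarrow> End i \<notin> Y)}"
definition bbf :: "(svert \<Rightarrow> nat) \<Rightarrow> nat \<Rightarrow> svert \<Rightarrow> nat" where "bbf \<alpha> i0 = \<alpha>(Mid i0 := 2, Torso := 0)"
definition Ibf :: "nat \<Rightarrow> (svert \<Rightarrow> nat) \<Rightarrow> nat \<Rightarrow> svert set" where
  "Ibf n \<alpha> i0 = U1 \<alpha> \<union> Mid ` (special_legs n \<alpha> - {i0}) \<union> End ` E1 n \<alpha>"

context
  fixes n k :: nat and \<alpha> :: "svert \<Rightarrow> nat"
  assumes inA: "in_A n k \<alpha>"
begin

lemma a_T: "\<alpha> Torso = 1" using inA by (simp add: in_A_def)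
lemma a_M: "i \<in> {1..n} \<Longrightarrow> \<alpha> (Mid i) \<le> 1" using inA by (simp add: in_A_def)
lemma a_ME: "i \<in> {1..n} \<Longrightarrow> \<alpha> (Mid i) + \<alpha> (End i) \<le> 2" using inA by (simp add: in_A_def)
lemma a_k: "card (special_legs n \<alpha>) = k" using inA by (simp add: in_A_def)

lemma a_le2: "\<alpha> Ucap \<le> 2 \<Longrightarrow> \<forall>v\<in>spider1_verts n. \<alpha> v \<le> 2"
  using a_T a_M a_ME by (fastforce simp: V_eq)

lemma W1a: "Wn (spider1_verts n) \<alpha> 1 = Da n \<alpha> \<union> End ` E1 n \<alpha>"
proof (rule set_eqI)
  fix x show "x \<in> Wn (spider1_verts n) \<alpha> 1 \<longleftrightarrow> x \<in> Da n \<alpha> \<union> End ` E1 n \<alpha>"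
  proof (cases x)
    case (Mid i)
    show ?thesis using a_M[of i] a_ME[of i]
      by (auto simp: Mid Wn_def V_mem Da_def U1_def special_legs_def Pl_def E1_def)
  next
    case (End i)
    show ?thesis using a_M[of i] a_ME[of i]
      by (auto simp: End Wn_def V_mem Da_def U1_def special_legs_def Pl_def E1_def)
  qed (auto simp: Wn_def V_mem Da_def U1_def a_T)
qed

lemma W1a_D: "Wn (spider1_verts n) \<alpha> 1 - Da n \<alpha> = End ` E1 n \<alpha>"
  unfolding W1a by (auto simp: Da_def E1_def Pl_def U1_def)

lemma Da_sub: "Da n \<alpha> \<subseteq> Wn (spider1_verts n) \<alpha> 1"
  unfolding W1a by auto

lemma okA:
  assumes m: "\<alpha> Ucap \<le> 1"
  shows "okS (spider1_verts n) (spider1_adj n) \<alpha> S \<longleftrightarrow> S \<inter> Da n \<alpha> \<in> {Xa n \<alpha>, Da n \<alpha> - Xa n \<alpha>}"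
proof -
  have le2: "\<forall>v\<in>spider1_verts n. \<alpha> v \<le> 2" using a_le2 m by simp
  let ?M = "{i\<in>{1..n}. \<alpha> (Mid i) = 1}"
  have SpPl: "special_legs n \<alpha> \<union> Pl n \<alpha> = ?M"
    using a_ME by (force simp: special_legs_def Pl_def)
  have per: "(CC \<alpha> S Torso (Mid i) \<and> CC \<alpha> S (Mid i) (End i)) \<longleftrightarrow>
      (\<alpha> (Mid i) = 1 \<longrightarrow> (Torso \<in> S \<longleftrightarrow> Mid i \<notin> S)) \<and>
      (\<alpha> (Mid i) = 1 \<and> \<alpha> (End i) = 1 \<longrightarrow> (Mid i \<in> S \<longleftrightarrow> End i \<notin> S))" if i: "i \<in> {1..n}" for i
  proof -
    have "\<alpha> (Mid i) = 0 \<or> \<alpha> (Mid i) = 1" using a_M[OF i] by auto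
    moreover have "\<alpha> (Mid i) = 1 \<longrightarrow> \<alpha> (End i) = 0 \<or> \<alpha> (End i) = 1" using a_ME[OF i] by auto
    ultimately show ?thesis using a_T unfolding CC_def by auto
  qed
  have cu: "CC \<alpha> S Torso Ucap \<longleftrightarrow> (Ucap \<in> U1 \<alpha> \<longrightarrow> (Torso \<in> S \<longleftrightarrow> Ucap \<notin> S))"
    using m a_T unfolding CC_def U1_def by auto
  have ok: "okS (spider1_verts n) (spider1_adj n) \<alpha> S \<longleftrightarrow>
     (\<forall>i\<in>?M. Torso \<in> S \<longleftrightarrow> Mid i \<notin> S) \<and> (\<forall>i\<in>Pl n \<alpha>. Mid i \<in> S \<longleftrightarrow> End i \<notin> S)
     \<and> (Ucap \<in> U1 \<alpha> \<longrightarrow> (Torso \<in> S \<longleftrightarrow> Ucap \<notin> S))"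
    unfolding okS_spider[OF le2] cu using per by (auto simp: Pl_def)
  have Da': "Da n \<alpha> = insert Torso (U1 \<alpha> \<union> Mid ` ?M \<union> End ` Pl n \<alpha>)" unfolding Da_def SpPl ..
  have PlM: "Pl n \<alpha> \<subseteq> ?M" by (auto simp: Pl_def)
  have U1u: "U1 \<alpha> \<subseteq> {Ucap}" by (auto simp: U1_def)
  have eX: "S \<inter> Da n \<alpha> = Xa n \<alpha> \<longleftrightarrow> Torso \<in> S \<and> (Ucap \<in> U1 \<alpha> \<longrightarrow> Ucap \<notin> S) \<and> (\<forall>i\<in>?M. Mid i \<notin> S) \<and> (\<forall>i\<in>Pl n \<alpha>. End i \<in> S)"
  proof
    assume e: "S \<inter> Da n \<alpha> = Xa n \<alpha>"
    have "x \<in> S \<longleftrightarrow> x \<in> Xa n \<alpha>" if "x \<in> Da n \<alpha>" for x using e that by blast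
    then show "Torso \<in> S \<and> (Ucap \<in> U1 \<alpha> \<longrightarrow> Ucap \<notin> S) \<and> (\<forall>i\<in>?M. Mid i \<notin> S) \<and> (\<forall>i\<in>Pl n \<alpha>. End i \<in> S)"
      unfolding Da' by (auto simp: Xa_def U1_def)
  next
    assume a: "Torso \<in> S \<and> (Ucap \<in> U1 \<alpha> \<longrightarrow> Ucap \<notin> S) \<and> (\<forall>i\<in>?M. Mid i \<notin> S) \<and> (\<forall>i\<in>Pl n \<alpha>. End i \<in> S)"
    show "S \<inter> Da n \<alpha> = Xa n \<alpha>"
    proof (rule set_eqI)
      fix x show "x \<in> S \<inter> Da n \<alpha> \<longleftrightarrow> x \<in> Xa n \<alpha>"
        using a PlM unfolding Da' by (cases x) (auto simp: Xa_def U1_def)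
    qed
  qed
  have eY: "S \<inter> Da n \<alpha> = Da n \<alpha> - Xa n \<alpha> \<longleftrightarrow> Torso \<notin> S \<and> (Ucap \<in> U1 \<alpha> \<longrightarrow> Ucap \<in> S) \<and> (\<forall>i\<in>?M. Mid i \<in> S) \<and> (\<forall>i\<in>Pl n \<alpha>. End i \<notin> S)"
  proof
    assume e: "S \<inter> Da n \<alpha> = Da n \<alpha> - Xa n \<alpha>"
    have "x \<in> S \<longleftrightarrow> x \<notin> Xa n \<alpha>" if "x \<in> Da n \<alpha>" for x using e that by blast
    then show "Torso \<notin> S \<and> (Ucap \<in> U1 \<alpha> \<longrightarrow> Ucap \<in> S) \<and> (\<forall>i\<in>?M. Mid i \<in> S) \<and> (\<forall>i\<in>Pl n \<alpha>. End i \<notin> S)"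
      unfolding Da' by (auto simp: Xa_def U1_def)
  next
    assume a: "Torso \<notin> S \<and> (Ucap \<in> U1 \<alpha> \<longrightarrow> Ucap \<in> S) \<and> (\<forall>i\<in>?M. Mid i \<in> S) \<and> (\<forall>i\<in>Pl n \<alpha>. End i \<notin> S)"
    show "S \<inter> Da n \<alpha> = Da n \<alpha> - Xa n \<alpha>"
    proof (rule set_eqI)
      fix x show "x \<in> S \<inter> Da n \<alpha> \<longleftrightarrow> x \<in> Da n \<alpha> - Xa n \<alpha>"
        using a PlM unfolding Da' by (cases x) (auto simp: Xa_def U1_def)
    qed
  qed
  show ?thesis unfolding ok insert_iff singleton_iff eX eY using PlM by blast
qed

lemma Sp_fin: "finite (special_legs n \<alpha>)" by (simp add: special_legs_def)
lemma Pl_fin: "finite (Pl n \<alpha>)" by (simp add: Pl_def)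
lemma E1_fin: "finite (E1 n \<alpha>)" by (simp add: E1_def)

lemma card_Xa: "card (Xa n \<alpha>) = 1 + card (Pl n \<alpha>)"
  unfolding Xa_def using Pl_fin by (simp add: card_image inj_on_def)

lemma card_DXa:
  assumes "\<alpha> Ucap \<le> 1"
  shows "card (Da n \<alpha> - Xa n \<alpha>) = \<alpha> Ucap + k + card (Pl n \<alpha>)"
proof -
  have e: "Da n \<alpha> - Xa n \<alpha> = U1 \<alpha> \<union> (Mid ` special_legs n \<alpha> \<union> Mid ` Pl n \<alpha>)"
    by (auto simp: Da_def Xa_def U1_def)
  have d1: "Mid ` special_legs n \<alpha> \<inter> Mid ` Pl n \<alpha> = {}" by (auto simp: special_legs_def Pl_def)
  have "card (Mid ` special_legs n \<alpha> \<union> Mid ` Pl n \<alpha>) = k + card (Pl n \<alpha>)"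
    by (subst card_Un_disjoint) (use d1 Sp_fin Pl_fin a_k in \<open>auto simp: card_image inj_on_def\<close>)
  moreover have "card (U1 \<alpha>) = \<alpha> Ucap" using assms by (auto simp: U1_def)
  moreover have "U1 \<alpha> \<inter> (Mid ` special_legs n \<alpha> \<union> Mid ` Pl n \<alpha>) = {}" by (auto simp: U1_def)
  ultimately show ?thesis unfolding e
    by (subst card_Un_disjoint) (auto simp: U1_def Sp_fin Pl_fin)
qed

lemma Xa_ne: "Xa n \<alpha> \<noteq> Da n \<alpha> - Xa n \<alpha>"
  by (auto simp: Xa_def)

lemma countA:
  assumes m: "\<alpha> Ucap \<le> 1" and pq: "p + q = (\<Sum>v\<in>spider1_verts n. \<alpha> v)"
  shows "Xcoef (spider1_verts n) (spider1_adj n) \<alpha> (content2 p q) =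
    bi (card (E1 n \<alpha>)) (int p - int (card (Wn (spider1_verts n) \<alpha> 2)) - 1 - int (card (Pl n \<alpha>)))
  + bi (card (E1 n \<alpha>)) (int p - int (card (Wn (spider1_verts n) \<alpha> 2)) - int (\<alpha> Ucap) - int k - int (card (Pl n \<alpha>)))"
proof -
  let ?V = "spider1_verts n" and ?W = "Wn (spider1_verts n) \<alpha> 1"
  have le2: "\<forall>v\<in>?V. \<alpha> v \<le> 2" using a_le2 m by simp
  have fW: "finite ?W" using finite_V by (simp add: Wn_def)
  have "Xcoef ?V (spider1_adj n) \<alpha> (content2 p q) = int (card {S. S \<subseteq> ?W \<and> okS ?V (spider1_adj n) \<alpha> S \<and>
      int (card S) = int p - int (card (Wn ?V \<alpha> 2))})"
    by (rule Xcoef_count[OF finite_V le2 pq])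
  also have "\<dots> = (\<Sum>Y\<in>{Xa n \<alpha>, Da n \<alpha> - Xa n \<alpha>}. bi (card (?W - Da n \<alpha>)) (int p - int (card (Wn ?V \<alpha> 2)) - int (card Y)))"
  proof (rule GC[OF fW Da_sub])
    show "{Xa n \<alpha>, Da n \<alpha> - Xa n \<alpha>} \<subseteq> Pow (Da n \<alpha>)" by (auto simp: Xa_def Da_def)
    show "okS ?V (spider1_adj n) \<alpha> S \<longleftrightarrow> S \<inter> Da n \<alpha> \<in> {Xa n \<alpha>, Da n \<alpha> - Xa n \<alpha>}" for S
      by (rule okA[OF m])
  qed
  also have "card (?W - Da n \<alpha>) = card (E1 n \<alpha>)"
    unfolding W1a_D by (simp add: card_image inj_on_def)
  finally show ?thesis using Xa_ne card_Xa card_DXa[OF m] by (simp add: algebra_simps)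
qed

lemma countA2:
  assumes m: "\<alpha> Ucap = 2" and pq: "p + q = (\<Sum>v\<in>spider1_verts n. \<alpha> v)"
  shows "Xcoef (spider1_verts n) (spider1_adj n) \<alpha> (content2 p q) = 0"
proof -
  have le2: "\<forall>v\<in>spider1_verts n. \<alpha> v \<le> 2" using a_le2 m by simp
  have "\<not> okS (spider1_verts n) (spider1_adj n) \<alpha> S" for S
    unfolding okS_spider[OF le2] CC_def using m a_T by simp
  then show ?thesis unfolding Xcoef_count[OF finite_V le2 pq] by simp
qed


lemma card_Db: "card (Db n \<alpha>) = 2 * card (Pl n \<alpha>)"
  unfolding Db_def using Pl_fin by (subst card_Un_disjoint) (auto simp: card_image inj_on_def)

lemma Chb_props: "card (Chb n \<alpha>) = 2 ^ card (Pl n \<alpha>)" "\<forall>Y\<in>Chb n \<alpha>. card Y = card (Pl n \<alpha>)"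
proof -
  let ?f = "\<lambda>Z. Mid ` Z \<union> End ` (Pl n \<alpha> - Z)"
  let ?g = "\<lambda>Y. {i\<in>Pl n \<alpha>. Mid i \<in> Y}"
  have "bij_betw ?f (Pow (Pl n \<alpha>)) (Chb n \<alpha>)"
  proof (rule bij_betw_byWitness[where f' = ?g])
    show "\<forall>Z\<in>Pow (Pl n \<alpha>). ?g (?f Z) = Z" by auto
    show "\<forall>Y\<in>Chb n \<alpha>. ?f (?g Y) = Y"
    proof
      fix Y assume Y: "Y \<in> Chb n \<alpha>"
      show "?f (?g Y) = Y"
      proof (rule set_eqI)
        fix x show "x \<in> ?f (?g Y) \<longleftrightarrow> x \<in> Y"
          using Y by (cases x) (auto simp: Chb_def Db_def)
      qed
    qed
    show "?f ` Pow (Pl n \<alpha>) \<subseteq> Chb n \<alpha>" by (auto simp: Chb_def Db_def)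
    show "?g ` Chb n \<alpha> \<subseteq> Pow (Pl n \<alpha>)" by auto
  qed
  then show "card (Chb n \<alpha>) = 2 ^ card (Pl n \<alpha>)" using card_Pow[OF Pl_fin] bij_betw_same_card by metis
  show "\<forall>Y\<in>Chb n \<alpha>. card Y = card (Pl n \<alpha>)"
  proof
    fix Y assume Y: "Y \<in> Chb n \<alpha>"
    have e: "Y = Mid ` ?g Y \<union> End ` (Pl n \<alpha> - ?g Y)"
    proof (rule set_eqI)
      fix x show "x \<in> Y \<longleftrightarrow> x \<in> Mid ` ?g Y \<union> End ` (Pl n \<alpha> - ?g Y)"
        using Y by (cases x) (auto simp: Chb_def Db_def)
    qed
    have "card (Mid ` ?g Y \<union> End ` (Pl n \<alpha> - ?g Y)) = card (?g Y) + card (Pl n \<alpha> - ?g Y)"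
      by (subst card_Un_disjoint) (auto simp: card_image inj_on_def Pl_fin)
    also have "\<dots> = card (Pl n \<alpha>)"
      using Pl_fin card_mono[OF Pl_fin, of "?g Y"] by (simp add: card_Diff_subset)
    finally show "card Y = card (Pl n \<alpha>)" using e by simp
  qed
qed

end

context
  fixes n k :: nat and \<alpha> :: "svert \<Rightarrow> nat" and i0 :: nat
  assumes inA: "in_A n k \<alpha>" and i0: "i0 \<in> special_legs n \<alpha>"
begin

abbreviation "bb \<equiv> bbf \<alpha> i0"
abbreviation "Ib \<equiv> Ibf n \<alpha> i0"

lemma i0n: "i0 \<in> {1..n}" "\<alpha> (Mid i0) = 1" "\<alpha> (End i0) = 0"
  using i0 by (auto simp: special_legs_def)

lemma b_le2: "\<alpha> Ucap \<le> 2 \<Longrightarrow> \<forall>v\<in>spider1_verts n. bb v \<le> 2"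
  using a_le2[OF inA] by (auto simp: bbf_def)

lemma W1b: "Wn (spider1_verts n) bb 1 = Db n \<alpha> \<union> Ib"
proof (rule set_eqI)
  fix x show "x \<in> Wn (spider1_verts n) bb 1 \<longleftrightarrow> x \<in> Db n \<alpha> \<union> Ib"
  proof (cases x)
    case (Mid i)
    show ?thesis using a_M[OF inA, of i] a_ME[OF inA, of i] i0n
      by (auto simp: Mid Wn_def V_mem Db_def Ibf_def bbf_def special_legs_def Pl_def E1_def U1_def)
  next
    case (End i)
    show ?thesis using a_M[OF inA, of i] a_ME[OF inA, of i]
      by (auto simp: End Wn_def V_mem Db_def Ibf_def bbf_def U1_def special_legs_def Pl_def E1_def)
  qed (auto simp: Wn_def V_mem Db_def Ibf_def U1_def bbf_def)
qed

lemma W1b_D: "Wn (spider1_verts n) bb 1 - Db n \<alpha> = Ib"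
  unfolding W1b by (auto simp: Db_def Ibf_def U1_def special_legs_def Pl_def E1_def)

lemma Db_sub: "Db n \<alpha> \<subseteq> Wn (spider1_verts n) bb 1"
  unfolding W1b by auto

lemma W2b: "Wn (spider1_verts n) bb 2 = insert (Mid i0) (Wn (spider1_verts n) \<alpha> 2)"
  using i0n by (auto simp: Wn_def bbf_def V_mem a_T[OF inA])

lemma Mid_i0_notin: "Mid i0 \<notin> Wn (spider1_verts n) \<alpha> 2"
  using i0n by (simp add: Wn_def)

lemma card_Ib: "card Ib = card (U1 \<alpha>) + (k - 1) + card (E1 n \<alpha>)"
proof -
  have "card (Mid ` (special_legs n \<alpha> - {i0})) = k - 1"
    using a_k[OF inA] i0 Sp_fin[OF inA] by (simp add: card_image inj_on_def)
  moreover have "card (End ` E1 n \<alpha>) = card (E1 n \<alpha>)" by (simp add: card_image inj_on_def)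
  moreover have "card (U1 \<alpha> \<union> Mid ` (special_legs n \<alpha> - {i0})) = card (U1 \<alpha>) + card (Mid ` (special_legs n \<alpha> - {i0}))"
    by (rule card_Un_disjoint) (auto simp: U1_def Sp_fin[OF inA])
  moreover have "card (U1 \<alpha> \<union> Mid ` (special_legs n \<alpha> - {i0}) \<union> End ` E1 n \<alpha>) =
      card (U1 \<alpha> \<union> Mid ` (special_legs n \<alpha> - {i0})) + card (End ` E1 n \<alpha>)"
    by (rule card_Un_disjoint) (auto simp: U1_def Sp_fin[OF inA] E1_fin[OF inA])
  ultimately show ?thesis unfolding Ibf_def by simp
qed

lemma okB:
  assumes m: "\<alpha> Ucap \<le> 2"
  shows "okS (spider1_verts n) (spider1_adj n) bb S \<longleftrightarrow> S \<inter> Db n \<alpha> \<in> Chb n \<alpha>"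
proof -
  have le2: "\<forall>v\<in>spider1_verts n. bb v \<le> 2" using b_le2 m by simp
  have per: "(CC bb S Torso (Mid i) \<and> CC bb S (Mid i) (End i)) \<longleftrightarrow>
      (i \<in> Pl n \<alpha> \<longrightarrow> (Mid i \<in> S \<longleftrightarrow> End i \<notin> S))" if i: "i \<in> {1..n}" for i
  proof (cases "i = i0")
    case True
    then show ?thesis using i0n by (auto simp: CC_def bbf_def Pl_def)
  next
    case False
    have "\<alpha> (Mid i) = 0 \<or> \<alpha> (Mid i) = 1" using a_M[OF inA i] by auto
    moreover have "\<alpha> (Mid i) = 1 \<longrightarrow> \<alpha> (End i) = 0 \<or> \<alpha> (End i) = 1" using a_ME[OF inA i] by auto
    ultimately show ?thesis using False i unfolding CC_def by (auto simp: bbf_def Pl_def)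
  qed
  have cu: "CC bb S Torso Ucap" by (simp add: CC_def bbf_def)
  have "okS (spider1_verts n) (spider1_adj n) bb S \<longleftrightarrow> (\<forall>i\<in>Pl n \<alpha>. Mid i \<in> S \<longleftrightarrow> End i \<notin> S)"
    unfolding okS_spider[OF le2] using per cu by (auto simp: Pl_def)
  also have "\<dots> \<longleftrightarrow> S \<inter> Db n \<alpha> \<in> Chb n \<alpha>"
  proof
    assume a: "\<forall>i\<in>Pl n \<alpha>. Mid i \<in> S \<longleftrightarrow> End i \<notin> S"
    show "S \<inter> Db n \<alpha> \<in> Chb n \<alpha>" unfolding Chb_def Db_def using a by auto
  next
    assume a: "S \<inter> Db n \<alpha> \<in> Chb n \<alpha>"
    show "\<forall>i\<in>Pl n \<alpha>. Mid i \<in> S \<longleftrightarrow> End i \<notin> S"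
    proof
      fix i assume i: "i \<in> Pl n \<alpha>"
      have "Mid i \<in> S \<inter> Db n \<alpha> \<longleftrightarrow> End i \<notin> S \<inter> Db n \<alpha>" using a i unfolding Chb_def by blast
      then show "Mid i \<in> S \<longleftrightarrow> End i \<notin> S" using i by (auto simp: Db_def)
    qed
  qed
  finally show ?thesis .
qed

lemma countB:
  assumes m: "\<alpha> Ucap \<le> 2" and pq: "p + q = (\<Sum>v\<in>spider1_verts n. bb v)"
  shows "Xcoef (spider1_verts n) (spider1_adj n) bb (content2 p q) =
    2 ^ card (Pl n \<alpha>) * bi (card (U1 \<alpha>) + (k - 1) + card (E1 n \<alpha>))
      (int p - int (card (Wn (spider1_verts n) \<alpha> 2)) - 1 - int (card (Pl n \<alpha>)))"
proof -
  let ?V = "spider1_verts n" and ?W = "Wn (spider1_verts n) bb 1"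
  have le2: "\<forall>v\<in>?V. bb v \<le> 2" using b_le2 m by simp
  have fW: "finite ?W" using finite_V by (simp add: Wn_def)
  have w2: "card (Wn ?V bb 2) = card (Wn ?V \<alpha> 2) + 1"
    unfolding W2b using Mid_i0_notin finite_V by (simp add: Wn_def)
  have "Xcoef ?V (spider1_adj n) bb (content2 p q) = int (card {S. S \<subseteq> ?W \<and> okS ?V (spider1_adj n) bb S \<and>
      int (card S) = int p - int (card (Wn ?V bb 2))})"
    by (rule Xcoef_count[OF finite_V le2 pq])
  also have "\<dots> = (\<Sum>Y\<in>Chb n \<alpha>. bi (card (?W - Db n \<alpha>)) (int p - int (card (Wn ?V bb 2)) - int (card Y)))"
  proof (rule GC[OF fW Db_sub])
    show "Chb n \<alpha> \<subseteq> Pow (Db n \<alpha>)" unfolding Chb_def by blast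
    show "okS ?V (spider1_adj n) bb S \<longleftrightarrow> S \<inter> Db n \<alpha> \<in> Chb n \<alpha>" for S
      by (rule okB[OF m])
  qed
  also have "\<dots> = (\<Sum>Y\<in>Chb n \<alpha>. bi (card Ib) (int p - int (card (Wn ?V bb 2)) - int (card (Pl n \<alpha>))))"
    unfolding W1b_D by (rule sum.cong[OF refl]) (simp add: Chb_props(2)[OF inA])
  also have "\<dots> = 2 ^ card (Pl n \<alpha>) * bi (card Ib) (int p - int (card (Wn ?V bb 2)) - int (card (Pl n \<alpha>)))"
    using Chb_props(1)[OF inA] by simp
  finally show ?thesis unfolding card_Ib w2 by (simp add: algebra_simps)
qed

lemma sum_bb: "(\<Sum>v\<in>spider1_verts n. bb v) = (\<Sum>v\<in>spider1_verts n. \<alpha> v)"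
proof -
  let ?V = "spider1_verts n"
  have T: "Torso \<in> ?V" and M: "Mid i0 \<in> ?V" using i0n V_mem by auto
  have "(\<Sum>v\<in>?V. bb v) = bb Torso + bb (Mid i0) + (\<Sum>v\<in>?V - {Torso, Mid i0}. bb v)"
    using T M finite_V by (simp add: sum.remove[of _ Torso] sum.remove[of _ "Mid i0"] insert_Diff_if Diff_insert2[symmetric])
  also have "(\<Sum>v\<in>?V - {Torso, Mid i0}. bb v) = (\<Sum>v\<in>?V - {Torso, Mid i0}. \<alpha> v)"
    by (rule sum.cong) (auto simp: bbf_def)
  also have "bb Torso + bb (Mid i0) + (\<Sum>v\<in>?V - {Torso, Mid i0}. \<alpha> v) = \<alpha> Torso + \<alpha> (Mid i0) + (\<Sum>v\<in>?V - {Torso, Mid i0}. \<alpha> v)"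
    using i0n a_T[OF inA] by (simp add: bbf_def)
  also have "\<dots> = (\<Sum>v\<in>?V. \<alpha> v)"
    using T M finite_V by (simp add: sum.remove[of _ Torso] sum.remove[of _ "Mid i0"] insert_Diff_if Diff_insert2[symmetric])
  finally show ?thesis .
qed

end

lemma ineq_from_su:
  fixes F :: "nat \<Rightarrow> nat \<Rightarrow> int"
  assumes su: "su M h" and dd: "int d = 2 * c0 + M"
    and Fh: "\<And>p q. p + q = d \<Longrightarrow> F p q = h (int p - c0)"
  shows "\<forall>r. 1 \<le> r \<longrightarrow> 2 * r \<le> d \<longrightarrow> F (d - r + 1) (r - 1) \<le> F (d - r) r"
proof (intro allI impI)
  fix r :: nat assume r: "1 \<le> r" "2 * r \<le> d"
  let ?t = "int (d - r) - c0"
  have "F (d - r + 1) (r - 1) = h (int (d - r + 1) - c0)" using r by (intro Fh) simp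
  also have "int (d - r + 1) - c0 = ?t + 1" using r by simp
  also have "h (?t + 1) \<le> h ?t" by (rule su_dec[OF su]) (use r dd in simp)
  also have "h ?t = F (d - r) r" using r by (intro Fh[symmetric]) simp
  finally show "F (d - r + 1) (r - 1) \<le> F (d - r) r" .
qed

theorem mainTheorem11:
  fixes n k j :: nat and \<alpha> :: "svert \<Rightarrow> nat"
  assumes "in_A n k \<alpha>" and "2 \<le> k" and "1 \<le> j" and "j \<le> k"
  shows "schur2_nonneg (\<Sum>v\<in>spider1_verts n. \<alpha> v)
           (\<lambda>a. Xcoef (spider1_verts n) (spider1_adj n) \<alpha> a
              + Xcoef (spider1_verts n) (spider1_adj n) (phi n j \<alpha>) a)"
proof -
  note inA = assms(1)
  let ?V = "spider1_verts n" and ?E = "spider1_adj n"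
  define d where "d = (\<Sum>v\<in>?V. \<alpha> v)"
  define i0 where "i0 = sorted_list_of_set (special_legs n \<alpha>) ! (j - 1)"
  have i0: "i0 \<in> special_legs n \<alpha>"
  proof -
    have "j - 1 < length (sorted_list_of_set (special_legs n \<alpha>))"
      using a_k[OF inA] Sp_fin[OF inA] assms(3,4) by simp
    then show ?thesis unfolding i0_def using Sp_fin[OF inA]
      by (metis nth_mem set_sorted_list_of_set)
  qed
  have phi: "phi n j \<alpha> = bbf \<alpha> i0" by (simp add: phi_def bbf_def i0_def)
  have sb: "(\<Sum>v\<in>?V. bbf \<alpha> i0 v) = d" using sum_bb[OF inA i0] by (simp add: d_def)
  define F where "F a = Xcoef ?V ?E \<alpha> a + Xcoef ?V ?E (bbf \<alpha> i0) a" for a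
  have goal: "schur2_nonneg d F"
  proof (rule abstract_main)
    have "\<alpha> Torso \<le> d" unfolding d_def
      by (rule member_le_sum) (auto simp: V_mem finite_V)
    then show "1 \<le> d" using a_T[OF inA] by simp
    show "\<forall>a. \<not> good d a \<longrightarrow> F a = 0"
    proof (intro allI impI)
      fix a assume ng: "\<not> good d a"
      have "Xcoef ?V ?E \<alpha> a = 0" using Xcoef_good[OF finite_V, where E="?E" and \<alpha>=\<alpha> and a=a] ng by (auto simp: d_def)
      moreover have "Xcoef ?V ?E (bbf \<alpha> i0) a = 0" using Xcoef_good[OF finite_V, where E="?E" and \<alpha>="bbf \<alpha> i0" and a=a] ng sb by auto
      ultimately show "F a = 0" by (simp add: F_def)
    qed
    show "\<forall>a i. 1 \<le> i \<longrightarrow> F (a \<circ> sw i) = F a" by (simp add: F_def Xcoef_sw)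
    show "0 \<le> F (content2 d 0)" by (simp add: F_def Xcoef_XS)
    show "\<forall>r. 1 \<le> r \<longrightarrow> 2 * r \<le> d \<longrightarrow> F (content2 (d - r + 1) (r - 1)) \<le> F (content2 (d - r) r)"
    proof (cases "3 \<le> \<alpha> Ucap")
      case True
      have "F (content2 p q) = 0" for p q
      proof -
        have u: "Ucap \<in> ?V" by (simp add: V_mem)
        have "bbf \<alpha> i0 Ucap = \<alpha> Ucap" by (simp add: bbf_def)
        then show ?thesis using Xcoef_big[OF finite_V u, where \<alpha>=\<alpha> and E="?E" and p=p and q=q] Xcoef_big[OF finite_V u, where \<alpha>="bbf \<alpha> i0" and E="?E" and p=p and q=q] True
          by (simp add: F_def)
      qed
      then show ?thesis by simp
    next
      case False
      then have m2: "\<alpha> Ucap \<le> 2" by simp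
      define w where "w = card (Wn ?V \<alpha> 2)"
      define P where "P = card (Pl n \<alpha>)"
      define e1 where "e1 = card (E1 n \<alpha>)"
      define u1 where "u1 = card (U1 \<alpha>)"
      define c0 where "c0 = int w + 1 + int P"
      have le2b: "\<forall>v\<in>?V. bbf \<alpha> i0 v \<le> 2" using b_le2[OF inA i0 m2] .
      have dis: "Db n \<alpha> \<inter> Ibf n \<alpha> i0 = {}" using W1b_D[OF inA i0] by blast
      have "d = 2 * card (Wn ?V (bbf \<alpha> i0) 2) + card (Wn ?V (bbf \<alpha> i0) 1)"
        using sum_alpha[OF finite_V le2b] sb by simp
      also have "card (Wn ?V (bbf \<alpha> i0) 2) = w + 1"
        unfolding W2b[OF inA i0] w_def using Mid_i0_notin[OF inA i0] finite_V by (simp add: Wn_def)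
      also have "card (Wn ?V (bbf \<alpha> i0) 1) = 2 * P + (u1 + (k - 1) + e1)"
      proof -
        have fW: "finite (Wn ?V (bbf \<alpha> i0) 1)" using finite_V by (simp add: Wn_def)
        have fD: "finite (Db n \<alpha>)" "finite (Ibf n \<alpha> i0)"
          using finite_subset[OF Db_sub[OF inA i0] fW] W1b_D[OF inA i0, symmetric] fW by auto
        show ?thesis unfolding W1b[OF inA i0] card_Un_disjoint[OF fD dis] card_Db[OF inA] card_Ib[OF inA i0]
          by (simp add: P_def u1_def e1_def)
      qed
      finally have dform: "d = 2 * (w + 1) + 2 * P + (u1 + (k - 1) + e1)" by simp
      have cB: "Xcoef ?V ?E (bbf \<alpha> i0) (content2 p q) = 2 ^ P * bi (u1 + (k - 1) + e1) (int p - c0)"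
        if "p + q = d" for p q
        using countB[OF inA i0 m2, of p q] that sb by (simp add: P_def u1_def e1_def w_def c0_def algebra_simps)
      show ?thesis
      proof (cases "\<alpha> Ucap = 2")
        case True
        have u0: "u1 = 0" using True by (simp add: u1_def U1_def)
        let ?h = "\<lambda>t. 2 ^ P * bi (k - 1 + e1) t"
        have su: "su (int (k - 1 + e1)) ?h" by (rule su_scale[OF su_bi]) simp
        show ?thesis
        proof (rule ineq_from_su[OF su, of d c0])
          show "int d = 2 * c0 + int (k - 1 + e1)" using dform u0 by (simp add: c0_def)
          show "F (content2 p q) = ?h (int p - c0)" if "p + q = d" for p q
            using cB[OF that] countA2[OF inA True, of p q] that u0 by (simp add: F_def d_def)
        qed
      next
        case False
        then have m1: "\<alpha> Ucap \<le> 1" using m2 by simp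
        have u1m: "u1 = \<alpha> Ucap" using m1 by (auto simp: u1_def U1_def)
        define N where "N = \<alpha> Ucap + k - 1"
        have N1: "1 \<le> N" using assms(2) by (simp add: N_def)
        let ?h = "\<lambda>t. 2 ^ P * bi (N + e1) t + bi e1 t + bi e1 (t - int N)"
        have su: "su (int (N + e1)) ?h" by (rule su_full[OF N1]) simp
        show ?thesis
        proof (rule ineq_from_su[OF su, of d c0])
          show "int d = 2 * c0 + int (N + e1)" using dform u1m assms(2) by (simp add: c0_def N_def)
          show "F (content2 p q) = ?h (int p - c0)" if "p + q = d" for p q
          proof -
            have "Xcoef ?V ?E \<alpha> (content2 p q) = bi e1 (int p - c0) + bi e1 (int p - c0 - int N)"
              using countA[OF inA m1, of p q] that assms(2)
              by (simp add: d_def e1_def w_def P_def c0_def N_def algebra_simps of_nat_diff)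
            moreover have "u1 + (k - 1) + e1 = N + e1" using u1m assms(2) by (simp add: N_def)
            ultimately show ?thesis using cB[OF that] by (simp add: F_def)
          qed
        qed
      qed
    qed
  qed
  have Feq: "(\<lambda>a. Xcoef ?V ?E \<alpha> a + Xcoef ?V ?E (bbf \<alpha> i0) a) = F" by (simp add: F_def fun_eq_iff)
  show ?thesis using goal unfolding phi Feq d_def .
qed

end
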